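(* Any integrable complex structure $J$ on $\mathfrak{n}\times\mathfrak{n}$ is equivalent under some first kind automorphism to one of the following (matrices in the basis $(x_1,\dots,x_6)$): (i) $\tilde{S}_\varepsilon(\xi^5_5)=\begin{pmatrix} 0&-1&0&0&0&0\\ 1&0&0&0&0&0\\ 0&0&0&-1&0&0\\ 0&0&1&0&0&0\\ 0&0&0&0&\xi^5_5&-\varepsilon((\xi^5_5)^2+1)\\ 0&0&0&0&\varepsilon&-\xi^5_5 \end{pmatrix}$, $\varepsilon=\pm1$, $\xi^5_5\in\mathbb{R}$. $\tilde{S}_{\varepsilon'}({\xi'}^5_5)$ is equivalent to $\tilde{S}_\varepsilon(\xi^5_5)$ under some first (resp. second) kind automorphism if and only if $\varepsilon'=\varepsilon$, ${\xi'}^5_5=\xi^5_5$ (resp. $\varepsilon'=-\varepsilon$, ${\xi'}^5_5=-\xi^5_5$). (ii) $\tilde{D}(\xi^1_1)=\begin{pmatrix} \xi^1_1&0&-((\xi^1_1)^2+1)&0&0&0\\ 0&\xi^1_1&0&-((\xi^1_1)^2+1)&0&0\\ 1&0&-\xi^1_1&0&0&0\\ 0&1&0&-\xi^1_1&0&0\\ 0&0&0&0&\frac{(\xi^1_1)^2-1}{2\xi^1_1}&-\frac{((\xi^1_1)^2+1)^2}{2\xi^1_1}\\ 0&0&0&0&\frac{1}{2\xi^1_1}&\frac{1-(\xi^1_1)^2}{2\xi^1_1} \end{pmatrix}$, $\xi^1_1\in\mathbb{R}\setminus\{0\}$. $\tilde{D}({\xi'}^1_1)$ is equivalent to $\tilde{D}(\xi^1_1)$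 under some first (resp. second) kind automorphism if and only if ${\xi'}^1_1=\xi^1_1$ (resp. ${\xi'}^1_1=-\xi^1_1$). (iii) $\tilde{T}(\xi^3_3,\xi^4_3)=\begin{pmatrix} 0&-\xi^4_3\xi^3_3&-\xi^4_3\xi^3_3&\xi^4_3\xi^3_3-1&0&0\\ 1&-\xi^3_3&-\frac{(\xi^3_3)^2+1-\xi^4_3\xi^3_3}{\xi^3_3}&\xi^3_3&0&0\\ 0&\xi^3_3&\xi^3_3&-\xi^3_3&0&0\\ 1&0&\xi^4_3&0&0&0\\ 0&0&0&0&-\frac{\xi^4_3\xi^3_3-1}{\xi^3_3}&-\frac{(\xi^4_3\xi^3_3-2)\xi^4_3\xi^3_3+(\xi^3_3)^2+1}{(\xi^3_3)^2}\\ 0&0&0&0&1&\frac{\xi^4_3\xi^3_3-1}{\xi^3_3} \end{pmatrix}$, $\xi^3_3\in\mathbb{R}\setminus\{0\}$, $\xi^4_3\in\mathbb{R}$. $\tilde{T}({\xi'}^3_3,{\xi'}^4_3)$ is equivalent to $\tilde{T}(\xi^3_3,\xi^4_3)$ under some first (resp. second) kind automorphism if and only if ${\xi'}^3_3=\xi^3_3$, ${\xi'}^4_3=\xi^4_3$ (resp. ${\xi'}^3_3=-\xi^3_3$, ${\xi'}^4_3=-\xi^4_3$). Finally, the cases (i), (ii), (iii) are mutually non equivalent, either under first or second kind automorphism.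
   Context: $\mathfrak{n}\times\mathfrak{n}$ is the direct product of two copies of the real 3-dimensional Heisenberg Lie algebra, with basis $(x_1,\dots,x_6)$ and nonzero commutation relations $[x_1,x_2]=x_5$, $[x_3,x_4]=x_6$. An integrable complex structure is a linear map $J$ with $J^2=-1$ and $[JX,JY]-[X,Y]-J[JX,Y]-J[X,JY]=0$ for all $X,Y$. First kind automorphisms are the matrices $\Phi$ (in this basis) with upper-left $4\times4$ block $\mathrm{diag}(B_1,B_2)$, $B_1=\begin{pmatrix} b^1_1&b^1_2\\ b^2_1&b^2_2\end{pmatrix}$, $B_2=\begin{pmatrix} b^3_3&b^3_4\\ b^4_3&b^4_4\end{pmatrix}$, zero upper-right $4\times2$ block, arbitrary lower-left $2\times4$ block, and lower-right block $\mathrm{diag}(\det B_1,\det B_2)$, with $\det B_1\det B_2\neq0$. Second kind automorphisms are $\Theta\Phi$ with $\Phi$ first kind and $\Theta$ the switch $x_1\leftrightarrow x_3$, $x_2\leftrightarrow x_4$, $x_5\leftrightarrow x_6$. Equivalence means conjugation $J\mapsto \Phi J\Phi^{-1}$ by such an automorphism. *)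

theory Defs
  imports "Jordan_Normal_Form.Matrix" "Jordan_Normal_Form.Determinant"
begin

text \<open>Matrices/vectors are indexed 0..5; index k corresponds to the paper's x_(k+1).
  Column j of a matrix is the image of the basis vector x_(j+1).\<close>

definition nbr :: "real vec \<Rightarrow> real vec \<Rightarrow> real vec" where
  "nbr X Y = vec 6 (\<lambda>i. if i = 4 then X$0 * Y$1 - X$1 * Y$0
                         else if i = 5 then X$2 * Y$3 - X$3 * Y$2 else 0)"

definition integrable_cx :: "real mat \<Rightarrow> bool" where
  "integrable_cx J \<longleftrightarrow> J \<in> carrier_mat 6 6 \<and> J * J = - 1\<^sub>m 6 \<and>
     (\<forall>X \<in> carrier_vec 6. \<forall>Y \<in> carrier_vec 6.
        nbr (J *\<^sub>v X) (J *\<^sub>v Y) - nbr X Y - J *\<^sub>v nbr (J *\<^sub>v X) Y - J *\<^sub>v nbr X (J *\<^sub>v Y)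
          = 0\<^sub>v 6)"

definition first_kind :: "real mat \<Rightarrow> bool" where
  "first_kind P \<longleftrightarrow> P \<in> carrier_mat 6 6 \<and>
     (\<forall>i<4. \<forall>j<6. 4 \<le> j \<longrightarrow> P $$ (i,j) = 0) \<and>
     (\<forall>i<2. \<forall>j<4. 2 \<le> j \<longrightarrow> P $$ (i,j) = 0 \<and> P $$ (j,i) = 0) \<and>
     P $$ (4,4) = P $$ (0,0) * P $$ (1,1) - P $$ (0,1) * P $$ (1,0) \<and>
     P $$ (5,5) = P $$ (2,2) * P $$ (3,3) - P $$ (2,3) * P $$ (3,2) \<and>
     P $$ (4,5) = 0 \<and> P $$ (5,4) = 0 \<and>
     (P $$ (0,0) * P $$ (1,1) - P $$ (0,1) * P $$ (1,0)) *
     (P $$ (2,2) * P $$ (3,3) - P $$ (2,3) * P $$ (3,2)) \<noteq> 0"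

definition Theta :: "real mat" where
  "Theta = mat_of_rows_list 6
    [[0,0,1,0,0,0],[0,0,0,1,0,0],[1,0,0,0,0,0],[0,1,0,0,0,0],[0,0,0,0,0,1],[0,0,0,0,1,0]]"

definition second_kind :: "real mat \<Rightarrow> bool" where
  "second_kind P \<longleftrightarrow> (\<exists>F. first_kind F \<and> P = Theta * F)"

definition equiv_by :: "real mat \<Rightarrow> real mat \<Rightarrow> real mat \<Rightarrow> bool" where
  "equiv_by P J J' \<longleftrightarrow> (\<exists>Q \<in> carrier_mat 6 6. P * Q = 1\<^sub>m 6 \<and> Q * P = 1\<^sub>m 6 \<and>
       J' = P * J * Q)"

definition first_equiv :: "real mat \<Rightarrow> real mat \<Rightarrow> bool" where
  "first_equiv J J' \<longleftrightarrow> (\<exists>P. first_kind P \<and> equiv_by P J J')"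

definition second_equiv :: "real mat \<Rightarrow> real mat \<Rightarrow> bool" where
  "second_equiv J J' \<longleftrightarrow> (\<exists>P. second_kind P \<and> equiv_by P J J')"

definition S_t :: "real \<Rightarrow> real \<Rightarrow> real mat" where
  "S_t e x = mat_of_rows_list 6
    [[0,-1,0,0,0,0],[1,0,0,0,0,0],[0,0,0,-1,0,0],[0,0,1,0,0,0],
     [0,0,0,0,x,-e*(x^2+1)],[0,0,0,0,e,-x]]"

definition D_t :: "real \<Rightarrow> real mat" where
  "D_t x = mat_of_rows_list 6
    [[x,0,-(x^2+1),0,0,0],[0,x,0,-(x^2+1),0,0],[1,0,-x,0,0,0],[0,1,0,-x,0,0],
     [0,0,0,0,(x^2-1)/(2*x),-((x^2+1)^2)/(2*x)],[0,0,0,0,1/(2*x),(1-x^2)/(2*x)]]"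

text \<open>T_t a b with a = xi^3_3, b = xi^4_3.\<close>
definition T_t :: "real \<Rightarrow> real \<Rightarrow> real mat" where
  "T_t a b = mat_of_rows_list 6
    [[0,-b*a,-b*a,b*a-1,0,0],
     [1,-a,-(a^2+1-b*a)/a,a,0,0],
     [0,a,a,-a,0,0],
     [1,0,b,0,0,0],
     [0,0,0,0,-(b*a-1)/a,-((b*a-2)*b*a+a^2+1)/(a^2)],
     [0,0,0,0,1,(b*a-1)/a]]"

definition S_fam :: "real mat set" where
  "S_fam = {S_t e x | e x. e \<in> {1,-1}}"
definition D_fam :: "real mat set" where
  "D_fam = {D_t x | x. x \<noteq> 0}"
definition T_fam :: "real mat set" where
  "T_fam = {T_t a b | a b. a \<noteq> 0}"

end

theory Submission
  imports Defs
begin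


section \<open>2x2 matrices\<close>

datatype m2 = M2 real real real real

instantiation m2 :: ring_1
begin
fun plus_m2 :: "m2 \<Rightarrow> m2 \<Rightarrow> m2" where
  "plus_m2 (M2 a b c d) (M2 e f g h) = M2 (a+e) (b+f) (c+g) (d+h)"
fun minus_m2 :: "m2 \<Rightarrow> m2 \<Rightarrow> m2" where
  "minus_m2 (M2 a b c d) (M2 e f g h) = M2 (a-e) (b-f) (c-g) (d-h)"
fun uminus_m2 :: "m2 \<Rightarrow> m2" where
  "uminus_m2 (M2 a b c d) = M2 (-a) (-b) (-c) (-d)"
definition zero_m2 :: m2 where "zero_m2 = M2 0 0 0 0"
definition one_m2 :: m2 where "one_m2 = M2 1 0 0 1"
fun times_m2 :: "m2 \<Rightarrow> m2 \<Rightarrow> m2" where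
  "times_m2 (M2 a b c d) (M2 e f g h) = M2 (a*e+b*g) (a*f+b*h) (c*e+d*g) (c*f+d*h)"
instance proof
  fix a b c :: m2
  show "a + b + c = a + (b + c)" by (cases a; cases b; cases c) simp
  show "a + b = b + a" by (cases a; cases b) simp
  show "0 + a = a" by (cases a) (simp add: zero_m2_def)
  show "- a + a = 0" by (cases a) (simp add: zero_m2_def)
  show "a - b = a + - b" by (cases a; cases b) simp
  show "a * b * c = a * (b * c)" by (cases a; cases b; cases c) (simp add: algebra_simps)
  show "(a + b) * c = a * c + b * c" by (cases a; cases b; cases c) (simp add: algebra_simps)
  show "a * (b + c) = a * b + a * c" by (cases a; cases b; cases c) (simp add: algebra_simps)
  show "1 * a = a" by (cases a) (simp add: one_m2_def)
  show "a * 1 = a" by (cases a) (simp add: one_m2_def)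
  show "(0::m2) \<noteq> 1" by (simp add: zero_m2_def one_m2_def)
qed
end

fun det2 :: "m2 \<Rightarrow> real" where "det2 (M2 a b c d) = a*d - b*c"
fun tr2 :: "m2 \<Rightarrow> real" where "tr2 (M2 a b c d) = a + d"
fun adj2 :: "m2 \<Rightarrow> m2" where "adj2 (M2 a b c d) = M2 d (-b) (-c) a"
fun sm :: "real \<Rightarrow> m2 \<Rightarrow> m2" where "sm k (M2 a b c d) = M2 (k*a) (k*b) (k*c) (k*d)"
definition inv2 :: "m2 \<Rightarrow> m2" where "inv2 X = sm (1 / det2 X) (adj2 X)"

lemma det2_mult: "det2 (X * Y) = det2 X * det2 Y"
  by (cases X; cases Y) (simp add: algebra_simps)
lemma tr2_comm: "tr2 (X * Y) = tr2 (Y * X)"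
  by (cases X; cases Y) (simp add: algebra_simps)
lemma det2_one[simp]: "det2 1 = 1" by (simp add: one_m2_def)
lemma tr2_one[simp]: "tr2 1 = 2" by (simp add: one_m2_def)
lemma det2_uminus[simp]: "det2 (- X) = det2 X" by (cases X) simp
lemma tr2_uminus[simp]: "tr2 (- X) = - tr2 X" by (cases X) simp
lemma sm_mult_left: "sm k X * Y = sm k (X * Y)" by (cases X; cases Y) (simp add: algebra_simps)
lemma sm_mult_right: "X * sm k Y = sm k (X * Y)" by (cases X; cases Y) (simp add: algebra_simps)
lemma det2_sm: "det2 (sm k X) = k^2 * det2 X" by (cases X) (simp add: algebra_simps power2_eq_square)
lemma inv2_r: assumes "det2 X \<noteq> 0" shows "X * inv2 X = 1"
proof (cases X)
  case (M2 a b c d)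
  with assms have h: "a*d - b*c \<noteq> 0" "a*d \<noteq> b*c" by auto
  show ?thesis using h by (simp add: M2 inv2_def one_m2_def divide_simps)
qed
lemma inv2_l: assumes "det2 X \<noteq> 0" shows "inv2 X * X = 1"
proof (cases X)
  case (M2 a b c d)
  with assms have h: "a*d - b*c \<noteq> 0" "a*d \<noteq> b*c" by auto
  show ?thesis using h by (simp add: M2 inv2_def one_m2_def divide_simps)
qed
lemma det2_inv2: assumes "det2 X \<noteq> 0" shows "det2 (inv2 X) = 1 / det2 X"
proof (cases X)
  case (M2 a b c d)
  with assms have h: "a*d - b*c \<noteq> 0" "a*d \<noteq> b*c" by auto
  show ?thesis using h by (simp add: M2 inv2_def divide_simps power2_eq_square)
qed
lemma cayley: "X * X = sm (tr2 X) X - sm (det2 X) 1"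
  by (cases X) (simp add: one_m2_def algebra_simps)
lemma cancel_r: "det2 Q \<noteq> 0 \<Longrightarrow> X * Q = Y * Q \<Longrightarrow> X = Y"
  by (metis inv2_r mult.assoc mult_1_right)
lemma cancel_l: "det2 Q \<noteq> 0 \<Longrightarrow> Q * X = Q * Y \<Longrightarrow> X = Y"
  by (metis inv2_l mult.assoc mult_1_left)

section \<open>Blocks of 6x6 matrices\<close>

lemma sum6: "(\<Sum>k\<in>{0..<6::nat}. f k) = f 0 + f 1 + f 2 + f 3 + f 4 + (f 5::real)"
  by (simp add: numeral_eq_Suc sum.atLeast0_lessThan_Suc)

lemma mult6:
  assumes "A \<in> carrier_mat 6 6" "B \<in> carrier_mat 6 6" "i < 6" "j < 6"
  shows "(A * B) $$ (i,j) = A$$(i,0)*B$$(0,j) + A$$(i,1)*B$$(1,j) + A$$(i,2)*B$$(2,j)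
     + A$$(i,3)*B$$(3,j) + A$$(i,4)*B$$(4,j) + (A$$(i,5)*B$$(5,j)::real)"
proof -
  have "(A * B) $$ (i,j) = row A i \<bullet> col B j" using assms by simp
  also have "\<dots> = (\<Sum>k\<in>{0..<6}. row A i $ k * col B j $ k)" using assms by (simp add: scalar_prod_def)
  also have "\<dots> = (\<Sum>k\<in>{0..<6}. A $$ (i,k) * B $$ (k,j))"
    by (rule sum.cong) (use assms in auto)
  also have "\<dots> = A$$(i,0)*B$$(0,j) + A$$(i,1)*B$$(1,j) + A$$(i,2)*B$$(2,j)
     + A$$(i,3)*B$$(3,j) + A$$(i,4)*B$$(4,j) + (A$$(i,5)*B$$(5,j)::real)"
    using sum6[of "\<lambda>k. A$$(i,k)*B$$(k,j)"] by simp
  finally show ?thesis .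
qed

lemma mv6:
  assumes "A \<in> carrier_mat 6 6" "v \<in> carrier_vec 6" "i < 6"
  shows "(A *\<^sub>v v) $ i = A$$(i,0)*v$0 + A$$(i,1)*v$1 + A$$(i,2)*v$2
     + A$$(i,3)*v$3 + A$$(i,4)*v$4 + (A$$(i,5)*v$5::real)"
proof -
  have "(A *\<^sub>v v) $ i = row A i \<bullet> v" using assms by simp
  also have "\<dots> = (\<Sum>k\<in>{0..<6}. row A i $ k * v $ k)" using assms by (simp add: scalar_prod_def)
  also have "\<dots> = (\<Sum>k\<in>{0..<6}. A $$ (i,k) * v $ k)"
    by (rule sum.cong) (use assms in auto)
  also have "\<dots> = A$$(i,0)*v$0 + A$$(i,1)*v$1 + A$$(i,2)*v$2
     + A$$(i,3)*v$3 + A$$(i,4)*v$4 + (A$$(i,5)*v$5::real)"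
    using sum6[of "\<lambda>k. A$$(i,k)*v$k"] by simp
  finally show ?thesis .
qed

definition blk :: "real mat \<Rightarrow> nat \<Rightarrow> nat \<Rightarrow> m2" where
  "blk A r c = M2 (A$$(2*r,2*c)) (A$$(2*r,2*c+1)) (A$$(2*r+1,2*c)) (A$$(2*r+1,2*c+1))"

lemma blk_simps:
  "blk A 0 0 = M2 (A$$(0,0)) (A$$(0,1)) (A$$(1,0)) (A$$(1,1))"
  "blk A 0 1 = M2 (A$$(0,2)) (A$$(0,3)) (A$$(1,2)) (A$$(1,3))"
  "blk A 0 2 = M2 (A$$(0,4)) (A$$(0,5)) (A$$(1,4)) (A$$(1,5))"
  "blk A 1 0 = M2 (A$$(2,0)) (A$$(2,1)) (A$$(3,0)) (A$$(3,1))"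
  "blk A 1 1 = M2 (A$$(2,2)) (A$$(2,3)) (A$$(3,2)) (A$$(3,3))"
  "blk A 1 2 = M2 (A$$(2,4)) (A$$(2,5)) (A$$(3,4)) (A$$(3,5))"
  "blk A 2 0 = M2 (A$$(4,0)) (A$$(4,1)) (A$$(5,0)) (A$$(5,1))"
  "blk A 2 1 = M2 (A$$(4,2)) (A$$(4,3)) (A$$(5,2)) (A$$(5,3))"
  "blk A 2 2 = M2 (A$$(4,4)) (A$$(4,5)) (A$$(5,4)) (A$$(5,5))"
  by (simp_all add: blk_def numeral_eq_Suc)

lemmas blk_simps1 = blk_simps[unfolded One_nat_def]

lemma three_cases: "(r::nat) < 3 \<Longrightarrow> r = 0 \<or> r = 1 \<or> r = 2" by linarith

lemma blk_mult:
  assumes "A \<in> carrier_mat 6 6" "B \<in> carrier_mat 6 6" "r < 3" "c < 3"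
  shows "blk (A*B) r c = blk A r 0 * blk B 0 c + blk A r 1 * blk B 1 c + blk A r 2 * blk B 2 c"
proof -
  have A: "A \<in> carrier_mat 6 6" and B: "B \<in> carrier_mat 6 6" by fact+
  from three_cases[OF assms(3)] three_cases[OF assms(4)] show ?thesis
    by (auto simp: blk_def mult6[OF A B] algebra_simps numeral_eq_Suc)
qed

lemma blk_eq:
  assumes "A \<in> carrier_mat 6 6" "B \<in> carrier_mat 6 6"
    and h: "\<And>r c. r < 3 \<Longrightarrow> c < 3 \<Longrightarrow> blk A r c = blk B r c"
  shows "A = B"
proof (rule eq_matI)
  fix i j assume ij: "i < dim_row B" "j < dim_col B"
  then have i6: "i < 6" and j6: "j < 6" using assms by auto
  define r where "r = i div 2"
  define c where "c = j div 2"
  have rc: "r < 3" "c < 3" using i6 j6 r_def c_def by auto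
  have i: "i = 2*r + i mod 2" and j: "j = 2*c + j mod 2" using r_def c_def by auto
  have "i mod 2 = 0 \<or> i mod 2 = 1" "j mod 2 = 0 \<or> j mod 2 = 1" by auto
  with h[OF rc] show "A $$ (i, j) = B $$ (i, j)"
    by (subst i, subst j, subst i, subst j) (auto simp: blk_def)
qed (use assms in auto)

fun m2ent :: "m2 \<Rightarrow> nat \<Rightarrow> nat \<Rightarrow> real" where
  "m2ent (M2 a b c d) i j = (if i = 0 then (if j = 0 then a else b) else (if j = 0 then c else d))"

definition bm :: "(nat \<Rightarrow> nat \<Rightarrow> m2) \<Rightarrow> real mat" where
  "bm f = mat 6 6 (\<lambda>(i,j). m2ent (f (i div 2) (j div 2)) (i mod 2) (j mod 2))"

lemma bm_carrier[simp]: "bm f \<in> carrier_mat 6 6" by (simp add: bm_def)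

lemma blk_bm: assumes "r < 3" "c < 3" shows "blk (bm f) r c = f r c"
proof -
  have "2*r < 6" "2*r+1 < 6" "2*c < 6" "2*c+1 < 6" using assms by auto
  then show ?thesis by (cases "f r c") (simp add: blk_def bm_def)
qed

lemma blk_one: "r < 3 \<Longrightarrow> c < 3 \<Longrightarrow> blk (1\<^sub>m 6) r c = (if r = c then 1 else 0)"
  by (auto simp: blk_def one_m2_def zero_m2_def)

lemma blk_uminus: "A \<in> carrier_mat 6 6 \<Longrightarrow> r < 3 \<Longrightarrow> c < 3 \<Longrightarrow> blk (- A) r c = - blk A r c"
  by (simp add: blk_def)



definition cJ :: "real mat \<Rightarrow> nat \<Rightarrow> nat \<Rightarrow> real" where "cJ J p k = J$$(k,p)"
definition ev :: "nat \<Rightarrow> nat \<Rightarrow> real" where "ev p k = (if k = p then 1 else 0)"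
definition w4 :: "(nat \<Rightarrow> real) \<Rightarrow> (nat \<Rightarrow> real) \<Rightarrow> real" where "w4 f g = f 0 * g 1 - f 1 * g 0"
definition w5 :: "(nat \<Rightarrow> real) \<Rightarrow> (nat \<Rightarrow> real) \<Rightarrow> real" where "w5 f g = f 2 * g 3 - f 3 * g 2"

lemma nbr_idx: "k < 6 \<Longrightarrow> nbr X Y $ k = (if k = 4 then X$0*Y$1 - X$1*Y$0 else if k = 5 then X$2*Y$3 - X$3*Y$2 else 0)"
  by (simp add: nbr_def)
lemma nbr_carrier[simp]: "nbr X Y \<in> carrier_vec 6" by (simp add: nbr_def)
lemma dim_nbr[simp]: "dim_vec (nbr X Y) = 6" by (simp add: nbr_def)

lemma Jv_unit: assumes "J \<in> carrier_mat 6 6" "p < 6" "k < 6"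
  shows "(J *\<^sub>v unit_vec 6 p) $ k = cJ J p k"
proof -
  have "p = 0 \<or> p = 1 \<or> p = 2 \<or> p = 3 \<or> p = 4 \<or> p = 5" using assms by linarith
  then show ?thesis using mv6[OF assms(1) _ assms(3), of "unit_vec 6 p"] by (auto simp: cJ_def)
qed

lemma nij:
  assumes "integrable_cx J" "p < 6" "q < 6" "i < 6"
  shows "(if i = 4 then w4 (cJ J p) (cJ J q) - w4 (ev p) (ev q) else if i = 5 then w5 (cJ J p) (cJ J q) - w5 (ev p) (ev q) else 0)
     - J$$(i,4) * (w4 (cJ J p) (ev q) + w4 (ev p) (cJ J q))
     - J$$(i,5) * (w5 (cJ J p) (ev q) + w5 (ev p) (cJ J q)) = 0"
proof -
  have J: "J \<in> carrier_mat 6 6" using assms(1) by (simp add: integrable_cx_def)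
  define X where "X = (unit_vec 6 p :: real vec)"
  define Y where "Y = (unit_vec 6 q :: real vec)"
  have XY: "X \<in> carrier_vec 6" "Y \<in> carrier_vec 6" by (auto simp: X_def Y_def)
  have JX: "J *\<^sub>v X \<in> carrier_vec 6" "J *\<^sub>v Y \<in> carrier_vec 6" using J XY by auto
  have N: "nbr (J *\<^sub>v X) (J *\<^sub>v Y) - nbr X Y - J *\<^sub>v nbr (J *\<^sub>v X) Y - J *\<^sub>v nbr X (J *\<^sub>v Y) = 0\<^sub>v 6"
    using assms(1) XY by (simp add: integrable_cx_def)
  have "(nbr (J *\<^sub>v X) (J *\<^sub>v Y) - nbr X Y - J *\<^sub>v nbr (J *\<^sub>v X) Y - J *\<^sub>v nbr X (J *\<^sub>v Y)) $ i = 0"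
    using N assms(4) by simp
  then have E: "nbr (J *\<^sub>v X) (J *\<^sub>v Y) $ i - nbr X Y $ i - (J *\<^sub>v nbr (J *\<^sub>v X) Y) $ i - (J *\<^sub>v nbr X (J *\<^sub>v Y)) $ i = 0"
    using assms(4) J by simp
  have jx: "\<And>k. k < 6 \<Longrightarrow> (J *\<^sub>v X) $ k = cJ J p k" "\<And>k. k < 6 \<Longrightarrow> (J *\<^sub>v Y) $ k = cJ J q k"
    using Jv_unit[OF J] assms(2,3) by (auto simp: X_def Y_def)
  have x: "\<And>k. k < 6 \<Longrightarrow> X $ k = ev p k" "\<And>k. k < 6 \<Longrightarrow> Y $ k = ev q k"
    using assms(2,3) by (auto simp: X_def Y_def ev_def)
  have m: "\<And>W. W \<in> carrier_vec 6 \<Longrightarrow> (\<forall>k<4. W $ k = 0) \<Longrightarrow> (J *\<^sub>v W) $ i = J$$(i,4) * W$4 + J$$(i,5) * W$5"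
    using mv6[OF J _ assms(4)] by auto
  have n0: "\<And>U V. \<forall>k<4. nbr U V $ k = 0" by (simp add: nbr_def)
  have a: "nbr (J *\<^sub>v X) (J *\<^sub>v Y) $ i = (if i = 4 then w4 (cJ J p) (cJ J q) else if i = 5 then w5 (cJ J p) (cJ J q) else 0)"
    by (simp add: nbr_idx[OF assms(4)] jx w4_def w5_def)
  have b: "nbr X Y $ i = (if i = 4 then w4 (ev p) (ev q) else if i = 5 then w5 (ev p) (ev q) else 0)"
    by (simp add: nbr_idx[OF assms(4)] x w4_def w5_def)
  have c: "(J *\<^sub>v nbr (J *\<^sub>v X) Y) $ i = J$$(i,4) * w4 (cJ J p) (ev q) + J$$(i,5) * w5 (cJ J p) (ev q)"
    by (simp add: m n0 nbr_idx jx x w4_def w5_def)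
  have d: "(J *\<^sub>v nbr X (J *\<^sub>v Y)) $ i = J$$(i,4) * w4 (ev p) (cJ J q) + J$$(i,5) * w5 (ev p) (cJ J q)"
    by (simp add: m n0 nbr_idx jx x w4_def w5_def)
  show ?thesis using E unfolding a b c d by (auto simp: algebra_simps)
qed



lemma sq_entry:
  assumes "integrable_cx J" "i < 6" "j < 6"
  shows "J$$(i,0)*J$$(0,j) + J$$(i,1)*J$$(1,j) + J$$(i,2)*J$$(2,j)
     + J$$(i,3)*J$$(3,j) + J$$(i,4)*J$$(4,j) + J$$(i,5)*J$$(5,j) = (if i = j then -1 else 0)"
proof -
  have J: "J \<in> carrier_mat 6 6" and sq: "J * J = - 1\<^sub>m 6" using assms(1) by (auto simp: integrable_cx_def)
  have "(J*J)$$(i,j) = (if i = j then -1 else 0)" using sq assms(2,3) by simp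
  then show ?thesis using mult6[OF J J assms(2,3)] by simp
qed

lemma center_inv:
  assumes "integrable_cx J"
  shows "J$$(0,4) = 0" "J$$(1,4) = 0" "J$$(2,4) = 0" "J$$(3,4) = 0"
        "J$$(0,5) = 0" "J$$(1,5) = 0" "J$$(2,5) = 0" "J$$(3,5) = 0"
proof -
  note n = nij[OF assms]
  have s: "\<And>p q i. p < 6 \<Longrightarrow> q < 6 \<Longrightarrow> i < 4 \<Longrightarrow>
      J$$(i,4) * (w4 (cJ J p) (ev q) + w4 (ev p) (cJ J q)) + J$$(i,5) * (w5 (cJ J p) (ev q) + w5 (ev p) (cJ J q)) = 0"
  proof -
    fix p q i :: nat assume "p < 6" "q < 6" "i < 4"
    with n[of p q i] show "J$$(i,4) * (w4 (cJ J p) (ev q) + w4 (ev p) (cJ J q)) + J$$(i,5) * (w5 (cJ J p) (ev q) + w5 (ev p) (cJ J q)) = 0"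
      by simp
  qed
  have a1: "J$$(1,4) = 0" using s[of 4 0 1] by (simp add: w4_def w5_def cJ_def ev_def)
  have a0: "J$$(0,4) = 0" using s[of 4 1 0] by (simp add: w4_def w5_def cJ_def ev_def)
  have a3: "J$$(3,5) = 0" using s[of 5 2 3] by (simp add: w4_def w5_def cJ_def ev_def)
  have a2: "J$$(2,5) = 0" using s[of 5 3 2] by (simp add: w4_def w5_def cJ_def ev_def)
  have b1: "J$$(0,5) * J$$(3,4) = 0" using s[of 4 2 0] by (simp add: w4_def w5_def cJ_def ev_def)
  have b2: "J$$(1,5) * J$$(3,4) = 0" using s[of 4 2 1] by (simp add: w4_def w5_def cJ_def ev_def)
  have b3: "J$$(0,5) * J$$(2,4) = 0" using s[of 4 3 0] by (simp add: w4_def w5_def cJ_def ev_def)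
  have b4: "J$$(1,5) * J$$(2,4) = 0" using s[of 4 3 1] by (simp add: w4_def w5_def cJ_def ev_def)
  have q55: "J$$(5,0)*J$$(0,5) + J$$(5,1)*J$$(1,5) + J$$(5,4)*J$$(4,5) + J$$(5,5)*J$$(5,5) = -1"
    using sq_entry[OF assms, of 5 5] a2 a3 by simp
  have q25: "J$$(2,0)*J$$(0,5) + J$$(2,1)*J$$(1,5) + J$$(2,4)*J$$(4,5) = 0"
    using sq_entry[OF assms, of 2 5] a2 a3 by simp
  have q35: "J$$(3,0)*J$$(0,5) + J$$(3,1)*J$$(1,5) + J$$(3,4)*J$$(4,5) = 0"
    using sq_entry[OF assms, of 3 5] a2 a3 by simp
  have c: "J$$(2,4) = 0 \<and> J$$(3,4) = 0 \<and> J$$(0,5) = 0 \<and> J$$(1,5) = 0"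
  proof (cases "J$$(2,4) = 0 \<and> J$$(3,4) = 0")
    case True
  have q44: "J$$(4,4)*J$$(4,4) + J$$(4,5)*J$$(5,4) = -1"
    using sq_entry[OF assms, of 4 4] a0 a1 True by simp
  have q04: "J$$(0,5)*J$$(5,4) = 0" using sq_entry[OF assms, of 0 4] a0 a1 True by simp
  have q14: "J$$(1,5)*J$$(5,4) = 0" using sq_entry[OF assms, of 1 4] a0 a1 True by simp
    have "J$$(5,4) \<noteq> 0"
    proof
      assume "J$$(5,4) = 0"
      with q44 have "J$$(4,4)*J$$(4,4) = -1" by simp
      moreover have "J$$(4,4)*J$$(4,4) \<ge> 0" by simp
      ultimately show False by linarith
    qed
    with q04 q14 True show ?thesis by simp
  next
    case False
    then have "J$$(0,5) = 0 \<and> J$$(1,5) = 0" using b1 b2 b3 b4 by auto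
    then have "J$$(2,4)*J$$(4,5) = 0" "J$$(3,4)*J$$(4,5) = 0" using q25 q35 by auto
    then have "J$$(4,5) = 0" using False by auto
    with q55 \<open>J$$(0,5) = 0 \<and> J$$(1,5) = 0\<close> have "J$$(5,5)*J$$(5,5) = -1" by simp
    moreover have "J$$(5,5)*J$$(5,5) \<ge> 0" by simp
    ultimately show ?thesis by linarith
  qed
  show "J$$(0,4) = 0" "J$$(1,4) = 0" "J$$(2,4) = 0" "J$$(3,4) = 0"
        "J$$(0,5) = 0" "J$$(1,5) = 0" "J$$(2,5) = 0" "J$$(3,5) = 0"
    using a0 a1 a2 a3 c by auto
qed



lemma sm_add: "sm k X + sm l X = sm (k + l) X" by (cases X) (simp add: algebra_simps)
lemma sm_add2: "sm k X + sm k Y = sm k (X + Y)" by (cases X; cases Y) (simp add: algebra_simps)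
lemma sm_one[simp]: "sm 1 X = X" by (cases X) simp
lemma sm_zero[simp]: "sm 0 X = 0" by (cases X) (simp add: zero_m2_def)
lemma sm_uminus: "sm k (- X) = - sm k X" by (cases X) simp
lemma uminus_sm: "- sm k X = sm (-k) X" by (cases X) simp
lemma inv2_l2: "det2 X \<noteq> 0 \<Longrightarrow> inv2 X * (X * Y) = Y" by (metis inv2_l mult.assoc mult_1_left)
lemma inv2_r2: "det2 X \<noteq> 0 \<Longrightarrow> X * (inv2 X * Y) = Y" by (metis inv2_r mult.assoc mult_1_left)

lemma integ_blocks:
  assumes "integrable_cx J"
  shows "J \<in> carrier_mat 6 6" "blk J 0 2 = 0" "blk J 1 2 = 0"
    "blk J 0 0 * blk J 0 0 + blk J 0 1 * blk J 1 0 = -1"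
    "blk J 0 0 * blk J 0 1 + blk J 0 1 * blk J 1 1 = 0"
    "blk J 1 0 * blk J 0 0 + blk J 1 1 * blk J 1 0 = 0"
    "blk J 1 0 * blk J 0 1 + blk J 1 1 * blk J 1 1 = -1"
    "blk J 2 2 * blk J 2 2 = -1"
    "blk J 2 0 * blk J 0 0 + blk J 2 1 * blk J 1 0 + blk J 2 2 * blk J 2 0 = 0"
    "blk J 2 0 * blk J 0 1 + blk J 2 1 * blk J 1 1 + blk J 2 2 * blk J 2 1 = 0"
    "det2 (blk J 0 0) - 1 = tr2 (blk J 0 0) * J$$(4,4)"
    "det2 (blk J 1 0) = tr2 (blk J 0 0) * J$$(5,4)"
    "det2 (blk J 0 1) = tr2 (blk J 1 1) * J$$(4,5)"
    "det2 (blk J 1 1) - 1 = tr2 (blk J 1 1) * J$$(5,5)"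
    "blk J 2 2 = M2 (J$$(4,4)) (J$$(4,5)) (J$$(5,4)) (J$$(5,5))"
proof -
  have J: "J \<in> carrier_mat 6 6" and sq: "J * J = - 1\<^sub>m 6" using assms(1) by (auto simp: integrable_cx_def)
  show "J \<in> carrier_mat 6 6" by fact
  note ci = center_inv[OF assms]
  show z1: "blk J 0 2 = 0" "blk J 1 2 = 0" using ci by (auto simp: blk_simps blk_simps1 zero_m2_def)
  have b: "\<And>r c. r < 3 \<Longrightarrow> c < 3 \<Longrightarrow> blk J r 0 * blk J 0 c + blk J r 1 * blk J 1 c + blk J r 2 * blk J 2 c
     = (if r = c then -1 else 0)"
  proof -
    fix r c :: nat assume rc: "r < 3" "c < 3"
    have "blk (J*J) r c = - blk (1\<^sub>m 6) r c" using sq blk_uminus[of "1\<^sub>m 6" r c] rc by simp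
    then show "blk J r 0 * blk J 0 c + blk J r 1 * blk J 1 c + blk J r 2 * blk J 2 c = (if r = c then -1 else 0)"
      using blk_mult[OF J J rc] blk_one[OF rc] by simp
  qed
  show "blk J 0 0 * blk J 0 0 + blk J 0 1 * blk J 1 0 = -1" using b[of 0 0] z1 by simp
  show "blk J 0 0 * blk J 0 1 + blk J 0 1 * blk J 1 1 = 0" using b[of 0 1] z1 by simp
  show "blk J 1 0 * blk J 0 0 + blk J 1 1 * blk J 1 0 = 0" using b[of 1 0] z1 by simp
  show "blk J 1 0 * blk J 0 1 + blk J 1 1 * blk J 1 1 = -1" using b[of 1 1] z1 by simp
  show "blk J 2 2 * blk J 2 2 = -1" using b[of 2 2] z1 by simp
  show "blk J 2 0 * blk J 0 0 + blk J 2 1 * blk J 1 0 + blk J 2 2 * blk J 2 0 = 0" using b[of 2 0] by simp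
  show "blk J 2 0 * blk J 0 1 + blk J 2 1 * blk J 1 1 + blk J 2 2 * blk J 2 1 = 0" using b[of 2 1] by simp
  note n = nij[OF assms]
  show "det2 (blk J 0 0) - 1 = tr2 (blk J 0 0) * J$$(4,4)" using n[of 0 1 4]
    by (simp add: w4_def w5_def cJ_def ev_def blk_simps blk_simps1 algebra_simps)
  show "det2 (blk J 1 0) = tr2 (blk J 0 0) * J$$(5,4)" using n[of 0 1 5]
    by (simp add: w4_def w5_def cJ_def ev_def blk_simps blk_simps1 algebra_simps)
  show "det2 (blk J 0 1) = tr2 (blk J 1 1) * J$$(4,5)" using n[of 2 3 4]
    by (simp add: w4_def w5_def cJ_def ev_def blk_simps blk_simps1 algebra_simps)
  show "det2 (blk J 1 1) - 1 = tr2 (blk J 1 1) * J$$(5,5)" using n[of 2 3 5]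
    by (simp add: w4_def w5_def cJ_def ev_def blk_simps blk_simps1 algebra_simps)
  show "blk J 2 2 = M2 (J$$(4,4)) (J$$(4,5)) (J$$(5,4)) (J$$(5,5))" by (simp add: blk_simps blk_simps1)
qed

lemma all4: "(\<forall>i<(4::nat). P i) \<longleftrightarrow> P 0 \<and> P 1 \<and> P 2 \<and> P 3"
proof
  assume "\<forall>i<4. P i" thus "P 0 \<and> P 1 \<and> P 2 \<and> P 3" by simp
next
  assume h: "P 0 \<and> P 1 \<and> P 2 \<and> P 3"
  show "\<forall>i<4. P i"
  proof (intro allI impI)
    fix i::nat assume "i<4"
    then have "i=0 \<or> i=1 \<or> i=2 \<or> i=3" by linarith
    then show "P i" using h by auto
  qed
qed

lemma all6: "(\<forall>i<(6::nat). P i) \<longleftrightarrow> P 0 \<and> P 1 \<and> P 2 \<and> P 3 \<and> P 4 \<and> P 5"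
proof
  assume "\<forall>i<6. P i" thus "P 0 \<and> P 1 \<and> P 2 \<and> P 3 \<and> P 4 \<and> P 5" by simp
next
  assume h: "P 0 \<and> P 1 \<and> P 2 \<and> P 3 \<and> P 4 \<and> P 5"
  show "\<forall>i<6. P i"
  proof (intro allI impI)
    fix i::nat assume "i<6"
    then have "i=0 \<or> i=1 \<or> i=2 \<or> i=3 \<or> i=4 \<or> i=5" by linarith
    then show "P i" using h by auto
  qed
qed

lemma all2: "(\<forall>i<(2::nat). P i) \<longleftrightarrow> P 0 \<and> P 1"
  by (metis One_nat_def less_2_cases_iff)

lemma fk_bm:
  assumes "f 0 1 = 0" "f 0 2 = 0" "f 1 0 = 0" "f 1 2 = 0" "f 0 0 = B1" "f 1 1 = B2"
    "f 2 2 = M2 (det2 B1) 0 0 (det2 B2)" "det2 B1 * det2 B2 \<noteq> 0"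
  shows "first_kind (bm f)"
proof (cases B1; cases B2)
  fix a b c d e g h k assume B: "B1 = M2 a b c d" "B2 = M2 e g h k"
  show ?thesis using assms unfolding first_kind_def B
    by (simp add: all4 all6 all2 bm_def zero_m2_def)
qed



lemma core:
  fixes J K :: "real mat" and B1 B2 :: m2
  assumes J: "J \<in> carrier_mat 6 6" and K: "K \<in> carrier_mat 6 6"
    and J0: "blk J 0 2 = 0" "blk J 1 2 = 0"
    and K0: "blk K 0 2 = 0" "blk K 1 2 = 0" "blk K 2 0 = 0" "blk K 2 1 = 0"
    and ZZ: "blk J 2 2 * blk J 2 2 = -1"
    and C: "blk J 2 0 * blk J 0 0 + blk J 2 1 * blk J 1 0 + blk J 2 2 * blk J 2 0 = 0"
           "blk J 2 0 * blk J 0 1 + blk J 2 1 * blk J 1 1 + blk J 2 2 * blk J 2 1 = 0"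
    and dB: "det2 B1 \<noteq> 0" "det2 B2 \<noteq> 0"
    and h1: "B1 * blk J 0 0 = blk K 0 0 * B1"
    and h2: "B1 * blk J 0 1 = blk K 0 1 * B2"
    and h3: "B2 * blk J 1 0 = blk K 1 0 * B1"
    and h4: "B2 * blk J 1 1 = blk K 1 1 * B2"
    and h5: "M2 (det2 B1) 0 0 (det2 B2) * blk J 2 2 = blk K 2 2 * M2 (det2 B1) 0 0 (det2 B2)"
  shows "\<exists>P. first_kind P \<and> equiv_by P J K"
proof -
  define Dg where "Dg = M2 (det2 B1) 0 0 (det2 B2)"
  define Z where "Z = blk J 2 2"
  define L0 where "L0 = sm (-1/2) (Z * blk J 2 0)"
  define L1 where "L1 = sm (-1/2) (Z * blk J 2 1)"
  have dD: "det2 Dg \<noteq> 0" using dB by (simp add: Dg_def)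
  define f :: "nat \<Rightarrow> nat \<Rightarrow> m2" where "f = (\<lambda>r c. if r = 0 \<and> c = 0 then B1 else if r = 1 \<and> c = 1 then B2 else
      if r = 2 \<and> c = 2 then Dg else if r = 2 \<and> c = 0 then Dg * L0 else if r = 2 \<and> c = 1 then Dg * L1 else 0)"
  define g :: "nat \<Rightarrow> nat \<Rightarrow> m2" where "g = (\<lambda>r c. if r = 0 \<and> c = 0 then inv2 B1 else if r = 1 \<and> c = 1 then inv2 B2 else
      if r = 2 \<and> c = 2 then inv2 Dg else if r = 2 \<and> c = 0 then - (L0 * inv2 B1) else if r = 2 \<and> c = 1 then - (L1 * inv2 B2) else 0)"
  define P where "P = bm f"
  define Q where "Q = bm g"
  have P: "P \<in> carrier_mat 6 6" and Q: "Q \<in> carrier_mat 6 6" by (simp_all add: P_def Q_def)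
  have fk: "first_kind P" unfolding P_def
    by (rule fk_bm[of f B1 B2]) (use dB in \<open>simp_all add: f_def Dg_def\<close>)
  have bP: "\<And>r c. r < 3 \<Longrightarrow> c < 3 \<Longrightarrow> blk P r c = f r c" by (simp add: P_def blk_bm)
  have bQ: "\<And>r c. r < 3 \<Longrightarrow> c < 3 \<Longrightarrow> blk Q r c = g r c" by (simp add: Q_def blk_bm)
  have PQ: "P * Q = 1\<^sub>m 6"
  proof (rule blk_eq)
    fix r c :: nat assume rc: "r < 3" "c < 3"
    show "blk (P * Q) r c = blk (1\<^sub>m 6) r c"
      using three_cases[OF rc(1)] three_cases[OF rc(2)] dB dD
      by (auto simp: blk_mult[OF P Q rc] blk_one[OF rc] bP bQ f_def g_def inv2_r mult.assoc)
  qed (use P Q in auto)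
  have QP: "Q * P = 1\<^sub>m 6"
  proof (rule blk_eq)
    fix r c :: nat assume rc: "r < 3" "c < 3"
    show "blk (Q * P) r c = blk (1\<^sub>m 6) r c"
      using three_cases[OF rc(1)] three_cases[OF rc(2)] dB dD
      by (auto simp: blk_mult[OF Q P rc] blk_one[OF rc] bP bQ f_def g_def inv2_l inv2_l2 mult.assoc)
  qed (use P Q in auto)
  have hL0: "L0 * blk J 0 0 + L1 * blk J 1 0 + blk J 2 0 = Z * L0"
  proof -
    have a: "blk J 2 0 * blk J 0 0 + blk J 2 1 * blk J 1 0 = - (Z * blk J 2 0)"
      using C(1) unfolding Z_def by (simp add: eq_neg_iff_add_eq_0)
    have "L0 * blk J 0 0 + L1 * blk J 1 0 = sm (-1/2) (Z * (blk J 2 0 * blk J 0 0 + blk J 2 1 * blk J 1 0))"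
      by (simp add: L0_def L1_def sm_mult_left sm_add2 mult.assoc distrib_left)
    also have "\<dots> = sm (-1/2) (blk J 2 0)" using ZZ unfolding a Z_def
      by (simp add: mult.assoc[symmetric] sm_uminus uminus_sm)
    finally have "L0 * blk J 0 0 + L1 * blk J 1 0 + blk J 2 0 = sm (-1/2) (blk J 2 0) + blk J 2 0" by simp
    also have "\<dots> = sm (1/2) (blk J 2 0)" using sm_add[of "-1/2" "blk J 2 0" 1] by simp
    finally have e1: "L0 * blk J 0 0 + L1 * blk J 1 0 + blk J 2 0 = sm (1/2) (blk J 2 0)" .
    have "Z * L0 = sm (1/2) (blk J 2 0)" using ZZ unfolding Z_def L0_def
      by (simp add: sm_mult_right mult.assoc[symmetric] sm_uminus uminus_sm)
    then show ?thesis using e1 by simp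
  qed
  have hL1: "L0 * blk J 0 1 + L1 * blk J 1 1 + blk J 2 1 = Z * L1"
  proof -
    have a: "blk J 2 0 * blk J 0 1 + blk J 2 1 * blk J 1 1 = - (Z * blk J 2 1)"
      using C(2) unfolding Z_def by (simp add: eq_neg_iff_add_eq_0)
    have "L0 * blk J 0 1 + L1 * blk J 1 1 = sm (-1/2) (Z * (blk J 2 0 * blk J 0 1 + blk J 2 1 * blk J 1 1))"
      by (simp add: L0_def L1_def sm_mult_left sm_add2 mult.assoc distrib_left)
    also have "\<dots> = sm (-1/2) (blk J 2 1)" using ZZ unfolding a Z_def
      by (simp add: mult.assoc[symmetric] sm_uminus uminus_sm)
    finally have "L0 * blk J 0 1 + L1 * blk J 1 1 + blk J 2 1 = sm (-1/2) (blk J 2 1) + blk J 2 1" by simp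
    also have "\<dots> = sm (1/2) (blk J 2 1)" using sm_add[of "-1/2" "blk J 2 1" 1] by simp
    finally have e1: "L0 * blk J 0 1 + L1 * blk J 1 1 + blk J 2 1 = sm (1/2) (blk J 2 1)" .
    have "Z * L1 = sm (1/2) (blk J 2 1)" using ZZ unfolding Z_def L1_def
      by (simp add: sm_mult_right mult.assoc[symmetric] sm_uminus uminus_sm)
    then show ?thesis using e1 by simp
  qed
  have PJ: "P * J = K * P"
  proof (rule blk_eq)
    fix r c :: nat assume rc: "r < 3" "c < 3"
    have h5': "Dg * blk J 2 2 = blk K 2 2 * Dg" using h5 by (simp add: Dg_def)
    have K20: "blk K 2 2 * Dg = Dg * Z" using h5 by (simp add: Dg_def Z_def)
    have e20: "Dg * L0 * blk J 0 0 + Dg * L1 * blk J 1 0 + Dg * blk J 2 0 = blk K 2 2 * (Dg * L0)"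
    proof -
      have "Dg * L0 * blk J 0 0 + Dg * L1 * blk J 1 0 + Dg * blk J 2 0 = Dg * (L0 * blk J 0 0 + L1 * blk J 1 0 + blk J 2 0)"
        by (simp add: distrib_left mult.assoc)
      also have "\<dots> = Dg * (Z * L0)" using hL0 by simp
      also have "\<dots> = (Dg * Z) * L0" by (simp add: mult.assoc)
      also have "\<dots> = blk K 2 2 * (Dg * L0)" using K20 by (metis mult.assoc)
      finally show ?thesis .
    qed
    have e21: "Dg * L0 * blk J 0 1 + Dg * L1 * blk J 1 1 + Dg * blk J 2 1 = blk K 2 2 * (Dg * L1)"
    proof -
      have "Dg * L0 * blk J 0 1 + Dg * L1 * blk J 1 1 + Dg * blk J 2 1 = Dg * (L0 * blk J 0 1 + L1 * blk J 1 1 + blk J 2 1)"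
        by (simp add: distrib_left mult.assoc)
      also have "\<dots> = Dg * (Z * L1)" using hL1 by simp
      also have "\<dots> = (Dg * Z) * L1" by (simp add: mult.assoc)
      also have "\<dots> = blk K 2 2 * (Dg * L1)" using K20 by (metis mult.assoc)
      finally show ?thesis .
    qed
    note hs = J0 K0 h1 h2 h3 h4 e20 e21 h5'
    show "blk (P * J) r c = blk (K * P) r c"
      using three_cases[OF rc(1)] three_cases[OF rc(2)]
      using hs hs[unfolded One_nat_def] by (auto simp: blk_mult[OF P J rc] blk_mult[OF K P rc] bP f_def)
  qed (use P J K in auto)
  have "P * J * Q = K * P * Q" using PJ by simp
  also have "\<dots> = K * (P * Q)" using K P Q by (simp add: assoc_mult_mat)
  also have "\<dots> = K" using K PQ by simp
  finally have e: "K = P * J * Q" by simp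
  show ?thesis using fk P Q PQ QP e unfolding equiv_by_def by blast
qed



lemma sim_det_tr:
  assumes "det2 B \<noteq> 0" "B * X = Y * B"
  shows "det2 X = det2 Y" "tr2 X = tr2 Y"
proof -
  have "det2 B * det2 X = det2 Y * det2 B" using assms(2) by (metis det2_mult)
  then show "det2 X = det2 Y" using assms(1) by simp
  have Y: "Y = B * X * inv2 B" using assms by (metis inv2_r mult.assoc mult_1_right)
  have "tr2 Y = tr2 (inv2 B * (B * X))" unfolding Y by (metis tr2_comm mult.assoc)
  also have "\<dots> = tr2 X" using assms(1) by (simp add: inv2_l2)
  finally show "tr2 X = tr2 Y" by simp
qed

lemma case_b:
  fixes J K :: "real mat" and B2 :: m2
  assumes J: "J \<in> carrier_mat 6 6" and K: "K \<in> carrier_mat 6 6"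
    and J0: "blk J 0 2 = 0" "blk J 1 2 = 0"
    and K0: "blk K 0 2 = 0" "blk K 1 2 = 0" "blk K 2 0 = 0" "blk K 2 1 = 0"
    and ZZ: "blk J 2 2 * blk J 2 2 = -1"
    and C: "blk J 2 0 * blk J 0 0 + blk J 2 1 * blk J 1 0 + blk J 2 2 * blk J 2 0 = 0"
           "blk J 2 0 * blk J 0 1 + blk J 2 1 * blk J 1 1 + blk J 2 2 * blk J 2 1 = 0"
    and rJ: "blk J 0 0 * blk J 0 1 + blk J 0 1 * blk J 1 1 = 0"
            "blk J 1 0 * blk J 0 1 + blk J 1 1 * blk J 1 1 = -1"
    and nJ: "det2 (blk J 0 0) - 1 = tr2 (blk J 0 0) * z11"
            "det2 (blk J 1 0) = tr2 (blk J 0 0) * z21"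
            "det2 (blk J 0 1) = tr2 (blk J 1 1) * z12"
            "det2 (blk J 1 1) - 1 = tr2 (blk J 1 1) * z22"
            "blk J 2 2 = M2 z11 z12 z21 z22"
    and tS: "tr2 (blk J 1 1) \<noteq> 0" and dQ: "det2 (blk J 0 1) \<noteq> 0"
    and rK: "blk K 0 0 * blk K 0 1 + blk K 0 1 * blk K 1 1 = 0"
            "blk K 1 0 * blk K 0 1 + blk K 1 1 * blk K 1 1 = -1"
    and nK: "det2 (blk K 0 0) - 1 = tr2 (blk K 0 0) * y11"
            "det2 (blk K 1 0) = tr2 (blk K 0 0) * y21"
            "det2 (blk K 0 1) = tr2 (blk K 1 1) * y12"
            "det2 (blk K 1 1) - 1 = tr2 (blk K 1 1) * y22"
            "blk K 2 2 = M2 y11 y12 y21 y22"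
    and dQ0: "det2 (blk K 0 1) \<noteq> 0"
    and dB2: "det2 B2 \<noteq> 0" and hB2: "B2 * blk J 1 1 = blk K 1 1 * B2"
  shows "\<exists>P. first_kind P \<and> equiv_by P J K"
proof -
  define P where "P = blk J 0 0"
  define Q where "Q = blk J 0 1"
  define R where "R = blk J 1 0"
  define S where "S = blk J 1 1"
  define P0 where "P0 = blk K 0 0"
  define Q0 where "Q0 = blk K 0 1"
  define R0 where "R0 = blk K 1 0"
  define N0 where "N0 = blk K 1 1"
  note defs = P_def Q_def R_def S_def P0_def Q0_def R0_def N0_def
  define B1 where "B1 = Q0 * B2 * inv2 Q"
  have dQ': "det2 Q \<noteq> 0" and dQ0': "det2 Q0 \<noteq> 0" using dQ dQ0 by (simp_all add: defs)
  have dB1v: "det2 B1 = det2 Q0 * det2 B2 / det2 Q"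
    using dQ' by (simp add: B1_def det2_mult det2_inv2)
  have dB1: "det2 B1 \<noteq> 0" using dB1v dQ' dQ0' dB2 by simp
  have PQ: "P * Q = - (Q * S)" using rJ(1) by (simp add: defs eq_neg_iff_add_eq_0)
  have RQ: "R * Q = -1 - S * S" using rJ(2) by (simp add: defs algebra_simps eq_diff_eq)
  have PQ0: "P0 * Q0 = - (Q0 * N0)" using rK(1) by (simp add: defs eq_neg_iff_add_eq_0)
  have RQ0: "R0 * Q0 = -1 - N0 * N0" using rK(2) by (simp add: defs algebra_simps eq_diff_eq)
  have hB2': "B2 * S = N0 * B2" using hB2 by (simp add: defs)
  have h2: "B1 * Q = Q0 * B2" using dQ' by (simp add: B1_def mult.assoc inv2_l)
  have h1: "B1 * P = P0 * B1"
  proof (rule cancel_r[OF dQ'])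
    have "B1 * P * Q = - (B1 * Q * S)" by (simp add: mult.assoc PQ)
    also have "\<dots> = - (Q0 * N0 * B2)" by (simp add: h2 mult.assoc hB2')
    also have "\<dots> = P0 * Q0 * B2" by (simp add: PQ0)
    also have "\<dots> = P0 * B1 * Q" by (simp add: h2 mult.assoc)
    finally show "B1 * P * Q = P0 * B1 * Q" .
  qed
  have SS: "B2 * (S * S) = N0 * N0 * B2" by (metis hB2' mult.assoc)
  have h3: "B2 * R = R0 * B1"
  proof (rule cancel_r[OF dQ'])
    have "B2 * R * Q = - B2 - B2 * (S * S)" by (simp add: mult.assoc RQ algebra_simps)
    also have "\<dots> = (-1 - N0 * N0) * B2" by (simp add: SS algebra_simps)
    also have "\<dots> = R0 * Q0 * B2" by (simp add: RQ0)
    also have "\<dots> = R0 * B1 * Q" by (simp add: h2 mult.assoc)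
    finally show "B2 * R * Q = R0 * B1 * Q" .
  qed
  have sP: "det2 P = det2 S" "tr2 P = - tr2 S"
    using sim_det_tr[OF dQ', of "- S" P] PQ by simp_all
  have sP0: "det2 P0 = det2 N0" "tr2 P0 = - tr2 N0"
    using sim_det_tr[OF dQ0', of "- N0" P0] PQ0 by simp_all
  have sN: "det2 S = det2 N0" "tr2 S = tr2 N0" using sim_det_tr[OF dB2 hB2'] by simp_all
  have "B2 * (-1 - S * S) = (-1 - N0 * N0) * B2" by (simp add: SS algebra_simps)
  then have sM: "det2 (-1 - S * S) = det2 (-1 - N0 * N0)" using sim_det_tr[OF dB2] by blast
  have dR: "det2 R * det2 Q = det2 (-1 - S * S)" using RQ by (metis det2_mult)
  have dR0: "det2 R0 * det2 Q0 = det2 (-1 - N0 * N0)" using RQ0 by (metis det2_mult)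
  have t: "tr2 S \<noteq> 0" using tS by (simp add: defs)
  have z11: "z11 = (det2 S - 1) / (- tr2 S)" using nJ(1) sP t by (simp add: defs field_simps)
  have y11: "y11 = (det2 S - 1) / (- tr2 S)" using nK(1) sP0 sN t by (simp add: defs field_simps)
  have z22: "z22 = (det2 S - 1) / tr2 S" using nJ(4) t by (simp add: defs field_simps)
  have y22: "y22 = (det2 S - 1) / tr2 S" using nK(4) sN t by (simp add: defs field_simps)
  have z12: "z12 = det2 Q / tr2 S" using nJ(3) t by (simp add: defs field_simps)
  have y12: "y12 = det2 Q0 / tr2 S" using nK(3) sN t by (simp add: defs field_simps)
  have z21: "z21 = det2 (-1 - S * S) / (det2 Q * (- tr2 S))" using nJ(2) sP t dR dQ'
    by (simp add: defs field_simps)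
  have y21: "y21 = det2 (-1 - S * S) / (det2 Q0 * (- tr2 S))" using nK(2) sP0 sN t dR0 dQ0' sM
    by (simp add: defs field_simps)
  have h5: "M2 (det2 B1) 0 0 (det2 B2) * blk J 2 2 = blk K 2 2 * M2 (det2 B1) 0 0 (det2 B2)"
    unfolding nJ(5) nK(5) using dQ' dQ0' t
    by (simp add: z11 y11 z22 y22 z12 y12 z21 y21 dB1v field_simps)
  show ?thesis
    by (rule core[OF J K J0 K0 ZZ C dB1 dB2 _ _ _ hB2 h5]) (use h1 h2 h3 in \<open>simp_all add: defs\<close>)
qed



lemma mrl_idx: "i < 6 \<Longrightarrow> j < 6 \<Longrightarrow> length rs = 6 \<Longrightarrow> mat_of_rows_list 6 rs $$ (i,j) = rs ! i ! j"
  by (simp add: mat_of_rows_list_def)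

lemma mrl_carrier: "length rs = 6 \<Longrightarrow> mat_of_rows_list 6 rs \<in> carrier_mat 6 6"
  by (simp add: mat_of_rows_list_def)

definition rot :: m2 where "rot = M2 0 (-1) 1 0"
definition sw :: m2 where "sw = M2 0 1 1 0"

lemma S_carrier: "S_t e x \<in> carrier_mat 6 6" unfolding S_t_def by (rule mrl_carrier) simp
lemma D_carrier: "D_t x \<in> carrier_mat 6 6" unfolding D_t_def by (rule mrl_carrier) simp
lemma T_carrier: "T_t a b \<in> carrier_mat 6 6" unfolding T_t_def by (rule mrl_carrier) simp
lemma Theta_carrier: "Theta \<in> carrier_mat 6 6" unfolding Theta_def by (rule mrl_carrier) simp

lemma S_blk:
  "blk (S_t e x) 0 0 = rot" "blk (S_t e x) 0 1 = 0" "blk (S_t e x) 0 2 = 0"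
  "blk (S_t e x) 1 0 = 0" "blk (S_t e x) 1 1 = rot" "blk (S_t e x) 1 2 = 0"
  "blk (S_t e x) 2 0 = 0" "blk (S_t e x) 2 1 = 0" "blk (S_t e x) 2 2 = M2 x (-e*(x^2+1)) e (-x)"
  by (simp_all add: blk_simps blk_simps1 S_t_def mrl_idx rot_def zero_m2_def)

lemma D_blk:
  "blk (D_t x) 0 0 = M2 x 0 0 x" "blk (D_t x) 0 1 = M2 (-(x^2+1)) 0 0 (-(x^2+1))" "blk (D_t x) 0 2 = 0"
  "blk (D_t x) 1 0 = 1" "blk (D_t x) 1 1 = M2 (-x) 0 0 (-x)" "blk (D_t x) 1 2 = 0"
  "blk (D_t x) 2 0 = 0" "blk (D_t x) 2 1 = 0"
  "blk (D_t x) 2 2 = M2 ((x^2-1)/(2*x)) (-((x^2+1)^2)/(2*x)) (1/(2*x)) ((1-x^2)/(2*x))"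
  by (simp_all add: blk_simps blk_simps1 D_t_def mrl_idx zero_m2_def one_m2_def)

lemma T_blk:
  "blk (T_t a b) 0 0 = M2 0 (-b*a) 1 (-a)"
  "blk (T_t a b) 0 1 = M2 (-b*a) (b*a-1) (-(a^2+1-b*a)/a) a" "blk (T_t a b) 0 2 = 0"
  "blk (T_t a b) 1 0 = M2 0 a 1 0" "blk (T_t a b) 1 1 = M2 a (-a) b 0" "blk (T_t a b) 1 2 = 0"
  "blk (T_t a b) 2 0 = 0" "blk (T_t a b) 2 1 = 0"
  "blk (T_t a b) 2 2 = M2 (-(b*a-1)/a) (-((b*a-2)*b*a+a^2+1)/(a^2)) 1 ((b*a-1)/a)"
  by (simp_all add: blk_simps blk_simps1 T_t_def mrl_idx zero_m2_def)

lemmas S_blk1 = S_blk[unfolded One_nat_def]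
lemmas D_blk1 = D_blk[unfolded One_nat_def]
lemmas T_blk1 = T_blk[unfolded One_nat_def]

lemma Theta_blk: "r < 3 \<Longrightarrow> c < 3 \<Longrightarrow> blk Theta r c =
   (if r = 0 \<and> c = 1 then 1 else if r = 1 \<and> c = 0 then 1 else if r = 2 \<and> c = 2 then sw else 0)"
  apply (drule three_cases, drule three_cases)
  apply (auto simp: blk_simps blk_simps1 Theta_def mrl_idx zero_m2_def one_m2_def sw_def)
  done

lemma ThTh: "Theta * Theta = 1\<^sub>m 6"
proof (rule blk_eq)
  fix r c :: nat assume rc: "r < 3" "c < 3"
  show "blk (Theta * Theta) r c = blk (1\<^sub>m 6) r c"
    using three_cases[OF rc(1)] three_cases[OF rc(2)]
    by (auto simp: blk_mult[OF Theta_carrier Theta_carrier rc] Theta_blk blk_one[OF rc] sw_def one_m2_def)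
qed (use mult_carrier_mat[OF Theta_carrier Theta_carrier] Theta_carrier in auto)

lemma ThK_blk:
  assumes K: "K \<in> carrier_mat 6 6"
  shows "blk (Theta * K * Theta) 0 0 = blk K 1 1" "blk (Theta * K * Theta) 0 1 = blk K 1 0"
    "blk (Theta * K * Theta) 0 2 = blk K 1 2 * sw"
    "blk (Theta * K * Theta) 1 0 = blk K 0 1" "blk (Theta * K * Theta) 1 1 = blk K 0 0"
    "blk (Theta * K * Theta) 1 2 = blk K 0 2 * sw"
    "blk (Theta * K * Theta) 2 0 = sw * blk K 2 1" "blk (Theta * K * Theta) 2 1 = sw * blk K 2 0"
    "blk (Theta * K * Theta) 2 2 = sw * blk K 2 2 * sw"
proof -
  have TK: "Theta * K \<in> carrier_mat 6 6" using K Theta_carrier by simp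
  have e: "\<And>r c. r < 3 \<Longrightarrow> c < 3 \<Longrightarrow> blk (Theta * K * Theta) r c =
     (\<Sum>k\<in>{0,1,2::nat}. (\<Sum>l\<in>{0,1,2::nat}. blk Theta r l * blk K l k) * blk Theta k c)"
    by (simp add: blk_mult[OF TK Theta_carrier] blk_mult[OF Theta_carrier K] add.assoc)
  show "blk (Theta * K * Theta) 0 0 = blk K 1 1" "blk (Theta * K * Theta) 0 1 = blk K 1 0"
    "blk (Theta * K * Theta) 0 2 = blk K 1 2 * sw"
    "blk (Theta * K * Theta) 1 0 = blk K 0 1" "blk (Theta * K * Theta) 1 1 = blk K 0 0"
    "blk (Theta * K * Theta) 1 2 = blk K 0 2 * sw"
    "blk (Theta * K * Theta) 2 0 = sw * blk K 2 1" "blk (Theta * K * Theta) 2 1 = sw * blk K 2 0"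
    "blk (Theta * K * Theta) 2 2 = sw * blk K 2 2 * sw"
    by (simp_all add: e Theta_blk)
qed

lemmas ThK_blk1 = ThK_blk[unfolded One_nat_def]



lemma mc6: "A \<in> carrier_mat 6 6 \<Longrightarrow> B \<in> carrier_mat 6 6 \<Longrightarrow> A * B \<in> carrier_mat 6 6" by simp
lemma assoc6: "A \<in> carrier_mat 6 6 \<Longrightarrow> B \<in> carrier_mat 6 6 \<Longrightarrow> C \<in> carrier_mat 6 6 \<Longrightarrow> A * B * C = A * (B * C)"
  by (rule assoc_mult_mat)

lemma fk_blocks:
  assumes "first_kind F"
  shows "F \<in> carrier_mat 6 6" "blk F 0 1 = 0" "blk F 0 2 = 0" "blk F 1 0 = 0" "blk F 1 2 = 0"
    "blk F 2 2 = M2 (det2 (blk F 0 0)) 0 0 (det2 (blk F 1 1))"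
    "det2 (blk F 0 0) \<noteq> 0" "det2 (blk F 1 1) \<noteq> 0"
  using assms unfolding first_kind_def
  by (simp_all add: all4 all6 all2 blk_simps blk_simps1 zero_m2_def)

lemma first_equiv_eq:
  assumes "first_equiv J K" "J \<in> carrier_mat 6 6" "K \<in> carrier_mat 6 6"
  shows "\<exists>F. first_kind F \<and> F * J = K * F"
proof -
  obtain F Q where F: "first_kind F" and Q: "Q \<in> carrier_mat 6 6" "F * Q = 1\<^sub>m 6" "Q * F = 1\<^sub>m 6"
    and e: "K = F * J * Q"
    using assms(1) unfolding first_equiv_def equiv_by_def by blast
  have Fc: "F \<in> carrier_mat 6 6" using fk_blocks(1)[OF F] .
  have FJ: "F * J \<in> carrier_mat 6 6" using Fc assms by simp
  have "K * F = F * J * Q * F" using e by simp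
  also have "\<dots> = F * J * (Q * F)" using assoc_mult_mat[OF FJ Q(1) Fc] .
  also have "\<dots> = F * J" using Q right_mult_one_mat[OF FJ] by simp
  finally show ?thesis using F by metis
qed

lemma second_equiv_eq:
  assumes "second_equiv J K" "J \<in> carrier_mat 6 6" "K \<in> carrier_mat 6 6"
  shows "\<exists>F. first_kind F \<and> F * J = (Theta * K * Theta) * F"
proof -
  obtain P Q where P: "second_kind P" and Q: "Q \<in> carrier_mat 6 6" "P * Q = 1\<^sub>m 6" "Q * P = 1\<^sub>m 6"
    and e: "K = P * J * Q"
    using assms(1) unfolding second_equiv_def equiv_by_def by blast
  obtain F where F: "first_kind F" and PF: "P = Theta * F" using P unfolding second_kind_def by blast
  have Fc: "F \<in> carrier_mat 6 6" using fk_blocks(1)[OF F] .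
  have T: "Theta \<in> carrier_mat 6 6" by (rule Theta_carrier)
  have Pc: "P \<in> carrier_mat 6 6" using PF Fc T by simp
  have PJ: "P * J \<in> carrier_mat 6 6" using Pc assms by simp
  have "K * P = P * J * Q * P" using e by simp
  also have "\<dots> = P * J * (Q * P)" using assoc_mult_mat[OF PJ Q(1) Pc] .
  also have "\<dots> = P * J" using Q right_mult_one_mat[OF PJ] by simp
  finally have KP: "K * P = P * J" .
  have "Theta * K * Theta * F = Theta * (K * P)" using PF T Fc assms by (simp add: assoc6 mc6)
  also have "\<dots> = Theta * (Theta * F * J)" using KP PF by simp
  also have "\<dots> = (Theta * Theta) * F * J" using T Fc assms by (simp add: assoc6 mc6)
  also have "\<dots> = F * J" using ThTh Fc assms by simp
  finally show ?thesis using F by metis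
qed

lemma second_of_first:
  assumes "first_kind F" "equiv_by F J (Theta * K * Theta)"
    "J \<in> carrier_mat 6 6" "K \<in> carrier_mat 6 6"
  shows "second_equiv J K"
proof -
  obtain Q where Q: "Q \<in> carrier_mat 6 6" "F * Q = 1\<^sub>m 6" "Q * F = 1\<^sub>m 6"
    and e: "Theta * K * Theta = F * J * Q" using assms(2) unfolding equiv_by_def by blast
  have Fc: "F \<in> carrier_mat 6 6" using fk_blocks(1)[OF assms(1)] .
  have T: "Theta \<in> carrier_mat 6 6" by (rule Theta_carrier)
  have sk: "second_kind (Theta * F)" using assms(1) unfolding second_kind_def by blast
  have c1: "Theta * F * (Q * Theta) = 1\<^sub>m 6"
  proof -
    have "Theta * F * (Q * Theta) = Theta * (F * (Q * Theta))" using assoc_mult_mat[OF T Fc mult_carrier_mat[OF Q(1) T]] .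
    also have "\<dots> = Theta * (F * Q * Theta)" using assoc_mult_mat[OF Fc Q(1) T] by simp
    also have "\<dots> = 1\<^sub>m 6" using Q T ThTh by simp
    finally show ?thesis .
  qed
  have c2: "Q * Theta * (Theta * F) = 1\<^sub>m 6"
  proof -
    have "Q * Theta * (Theta * F) = Q * (Theta * (Theta * F))" using assoc_mult_mat[OF Q(1) T mult_carrier_mat[OF T Fc]] .
    also have "\<dots> = Q * (Theta * Theta * F)" using assoc_mult_mat[OF T T Fc] by simp
    also have "\<dots> = 1\<^sub>m 6" using Q Fc ThTh by simp
    finally show ?thesis .
  qed
  have c3: "K = Theta * F * J * (Q * Theta)"
  proof -
    have "Theta * F * J * (Q * Theta) = Theta * (F * J * Q) * Theta"
      using T Fc Q assms(3) by (simp add: assoc6 mc6)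
    also have "\<dots> = Theta * (Theta * K * Theta) * Theta" using e by simp
    also have "\<dots> = (Theta * Theta) * K * (Theta * Theta)" using T assms(4) by (simp add: assoc6 mc6)
    also have "\<dots> = K" using ThTh assms(4) by simp
    finally show ?thesis by simp
  qed
  have "Q * Theta \<in> carrier_mat 6 6" using Q T by simp
  then show ?thesis using sk c1 c2 c3 unfolding second_equiv_def equiv_by_def by blast
qed

lemma first_refl: assumes "J \<in> carrier_mat 6 6" shows "first_equiv J J"
proof -
  have fk: "first_kind (1\<^sub>m 6)" unfolding first_kind_def by (simp add: all4 all6 all2)
  have "equiv_by (1\<^sub>m 6) J J" unfolding equiv_by_def using assms by (intro bexI[of _ "1\<^sub>m 6"]) auto
  then show ?thesis using fk unfolding first_equiv_def by blast
qed

lemma blk_eqs: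
  assumes F: "first_kind F" and J: "J \<in> carrier_mat 6 6" and K: "K \<in> carrier_mat 6 6"
    and e: "F * J = K * F"
    and J0: "blk J 0 2 = 0" "blk J 1 2 = 0" "blk J 2 0 = 0" "blk J 2 1 = 0"
    and K0: "blk K 0 2 = 0" "blk K 1 2 = 0" "blk K 2 0 = 0" "blk K 2 1 = 0"
  shows "blk F 0 0 * blk J 0 0 = blk K 0 0 * blk F 0 0"
    "blk F 0 0 * blk J 0 1 = blk K 0 1 * blk F 1 1"
    "blk F 1 1 * blk J 1 0 = blk K 1 0 * blk F 0 0"
    "blk F 1 1 * blk J 1 1 = blk K 1 1 * blk F 1 1"
    "M2 (det2 (blk F 0 0)) 0 0 (det2 (blk F 1 1)) * blk J 2 2 = blk K 2 2 * M2 (det2 (blk F 0 0)) 0 0 (det2 (blk F 1 1))"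
proof -
  note fb = fk_blocks[OF F]
  have b: "\<And>r c. r < 3 \<Longrightarrow> c < 3 \<Longrightarrow> blk F r 0 * blk J 0 c + blk F r 1 * blk J 1 c + blk F r 2 * blk J 2 c
     = blk K r 0 * blk F 0 c + blk K r 1 * blk F 1 c + blk K r 2 * blk F 2 c"
    using e blk_mult[OF fb(1) J] blk_mult[OF K fb(1)] by metis
  show "blk F 0 0 * blk J 0 0 = blk K 0 0 * blk F 0 0" using b[of 0 0] fb J0 K0 by simp
  show "blk F 0 0 * blk J 0 1 = blk K 0 1 * blk F 1 1" using b[of 0 1] fb J0 K0 by simp
  show "blk F 1 1 * blk J 1 0 = blk K 1 0 * blk F 0 0" using b[of 1 0] fb J0 K0 by simp
  show "blk F 1 1 * blk J 1 1 = blk K 1 1 * blk F 1 1" using b[of 1 1] fb J0 K0 by simp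
  show "M2 (det2 (blk F 0 0)) 0 0 (det2 (blk F 1 1)) * blk J 2 2 = blk K 2 2 * M2 (det2 (blk F 0 0)) 0 0 (det2 (blk F 1 1))"
    using b[of 2 2] fb J0 K0 by simp
qed



definition zb :: "real mat \<Rightarrow> bool" where
  "zb J \<longleftrightarrow> J \<in> carrier_mat 6 6 \<and> blk J 0 2 = 0 \<and> blk J 1 2 = 0 \<and> blk J 2 0 = 0 \<and> blk J 2 1 = 0"

lemma zb_S: "zb (S_t e x)" by (simp add: zb_def S_carrier S_blk S_blk1)
lemma zb_D: "zb (D_t x)" by (simp add: zb_def D_carrier D_blk D_blk1)
lemma zb_T: "zb (T_t a b)" by (simp add: zb_def T_carrier T_blk T_blk1)

lemma zb_Th: "zb K \<Longrightarrow> zb (Theta * K * Theta)"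
  unfolding zb_def using ThK_blk[of K] by (auto intro!: mc6 Theta_carrier)

lemma first_blk:
  assumes "first_equiv J K" "zb J" "zb K"
  shows "\<exists>B1 B2. det2 B1 \<noteq> 0 \<and> det2 B2 \<noteq> 0 \<and>
    B1 * blk J 0 0 = blk K 0 0 * B1 \<and> B1 * blk J 0 1 = blk K 0 1 * B2 \<and>
    B2 * blk J 1 0 = blk K 1 0 * B1 \<and> B2 * blk J 1 1 = blk K 1 1 * B2 \<and>
    M2 (det2 B1) 0 0 (det2 B2) * blk J 2 2 = blk K 2 2 * M2 (det2 B1) 0 0 (det2 B2)"
proof -
  have c: "J \<in> carrier_mat 6 6" "K \<in> carrier_mat 6 6" using assms by (auto simp: zb_def)
  obtain F where F: "first_kind F" "F * J = K * F" using first_equiv_eq[OF assms(1) c] by blast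
  have zJ: "blk J 0 2 = 0" "blk J 1 2 = 0" "blk J 2 0 = 0" "blk J 2 1 = 0" using assms(2) by (auto simp: zb_def)
  have zK: "blk K 0 2 = 0" "blk K 1 2 = 0" "blk K 2 0 = 0" "blk K 2 1 = 0" using assms(3) by (auto simp: zb_def)
  note e = blk_eqs[OF F(1) c F(2) zJ zK]
  show ?thesis
    by (intro exI[of _ "blk F 0 0"] exI[of _ "blk F 1 1"] conjI e fk_blocks(7,8)[OF F(1)])
qed

lemma second_blk:
  assumes "second_equiv J K" "zb J" "zb K"
  shows "\<exists>B1 B2. det2 B1 \<noteq> 0 \<and> det2 B2 \<noteq> 0 \<and>
    B1 * blk J 0 0 = blk K 1 1 * B1 \<and> B1 * blk J 0 1 = blk K 1 0 * B2 \<and>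
    B2 * blk J 1 0 = blk K 0 1 * B1 \<and> B2 * blk J 1 1 = blk K 0 0 * B2 \<and>
    M2 (det2 B1) 0 0 (det2 B2) * blk J 2 2 = (sw * blk K 2 2 * sw) * M2 (det2 B1) 0 0 (det2 B2)"
proof -
  have c: "J \<in> carrier_mat 6 6" "K \<in> carrier_mat 6 6" using assms by (auto simp: zb_def)
  obtain F where F: "first_kind F" "F * J = (Theta * K * Theta) * F" using second_equiv_eq[OF assms(1) c] by blast
  have z: "zb (Theta * K * Theta)" using zb_Th[OF assms(3)] .
  have c2: "Theta * K * Theta \<in> carrier_mat 6 6" using z by (simp add: zb_def)
  have zJ: "blk J 0 2 = 0" "blk J 1 2 = 0" "blk J 2 0 = 0" "blk J 2 1 = 0" using assms(2) by (auto simp: zb_def)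
  have zK: "blk (Theta * K * Theta) 0 2 = 0" "blk (Theta * K * Theta) 1 2 = 0"
     "blk (Theta * K * Theta) 2 0 = 0" "blk (Theta * K * Theta) 2 1 = 0" using z by (auto simp: zb_def)
  note e = blk_eqs[OF F(1) c(1) c2 F(2) zJ zK, unfolded ThK_blk[OF c(2)]]
  show ?thesis
    by (intro exI[of _ "blk F 0 0"] exI[of _ "blk F 1 1"] conjI e fk_blocks(7,8)[OF F(1)])
qed

lemma scal_comm: "M2 x 0 0 x * B = B * M2 x 0 0 x" by (cases B) (simp add: algebra_simps)
lemma det0_zero: "det2 (0::m2) = 0" by (simp add: zero_m2_def)

lemma rot_pos: assumes "B * rot = rot * B" "det2 B \<noteq> 0" shows "det2 B > 0"
proof (cases B)
  case (M2 a b c d)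
  have e: "M2 (b * 1) (a * (-1)) (d * 1) (c * (-1)) = M2 (-1 * c) (-1 * d) (1 * a) (1 * b)"
    using assms(1) unfolding M2 rot_def by (simp only: times_m2.simps mult_zero_left mult_zero_right add_0 add_0_right)
  have "b = -c" "a = d" using e[unfolded m2.inject] by linarith+
  then have "det2 B = a^2 + c^2" using M2 by (simp add: power2_eq_square)
  moreover have "a^2 + c^2 \<ge> 0" by simp
  ultimately show ?thesis using assms(2) by linarith
qed

lemma dT_Q: "a \<noteq> 0 \<Longrightarrow> det2 (blk (T_t a b) 0 1) = - ((b*a - 1)^2 + a^2) / a"
  by (simp add: T_blk T_blk1 field_simps power2_eq_square)
lemma dT_Q_nz: "a \<noteq> 0 \<Longrightarrow> det2 (blk (T_t a b) 0 1) \<noteq> 0"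
proof -
  assume a: "a \<noteq> 0"
  have "(b*a - 1)^2 + a^2 > 0" using a by (simp add: add_nonneg_pos)
  then show ?thesis using dT_Q[OF a] a by simp
qed
lemma dT_R: "det2 (blk (T_t a b) 1 0) = - a" by (simp add: T_blk T_blk1)
lemmas dT_R1 = dT_R[unfolded One_nat_def]

lemma nz_cancel: "det2 B \<noteq> 0 \<Longrightarrow> M * B = 0 \<Longrightarrow> det2 M = 0"
  by (metis det2_mult det0_zero mult_eq_0_iff)
lemma nz_cancel2: "det2 B \<noteq> 0 \<Longrightarrow> B * M = 0 \<Longrightarrow> det2 M = 0"
  by (metis det2_mult det0_zero mult_eq_0_iff)

lemma no_SD: "A \<in> S_fam \<Longrightarrow> B \<in> D_fam \<Longrightarrow> \<not> first_equiv A B \<and> \<not> second_equiv A B"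
proof -
  assume "A \<in> S_fam" "B \<in> D_fam"
  then obtain e x y where A: "A = S_t e x" and B: "B = D_t y" and y: "y \<noteq> 0" by (auto simp: S_fam_def D_fam_def)
  have f: "\<not> first_equiv A B"
  proof
    assume "first_equiv A B"
    from first_blk[OF this] obtain B1 B2 where "det2 B1 \<noteq> 0" "B2 * blk A 1 0 = blk B 1 0 * B1"
      unfolding A B using zb_S zb_D by blast
    then show False by (simp add: A B S_blk S_blk1 D_blk D_blk1 det0_zero)
  qed
  have s: "\<not> second_equiv A B"
  proof
    assume "second_equiv A B"
    from second_blk[OF this] obtain B1 B2 where d: "det2 B1 \<noteq> 0" and h: "B2 * blk A 1 0 = blk B 0 1 * B1"
      unfolding A B using zb_S zb_D by blast
    have "det2 (blk B 0 1) = 0" using nz_cancel[OF d] h by (simp add: A S_blk S_blk1)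
    moreover have "det2 (blk B 0 1) = (y^2+1)^2" by (simp add: B D_blk D_blk1 power2_eq_square algebra_simps)
    moreover have "y^2+1 > (0::real)" by (simp add: add_nonneg_pos)
    then have "(y^2+1)^2 > (0::real)" by simp
    ultimately show False by simp
  qed
  show ?thesis using f s by blast
qed

lemma no_ST: "A \<in> S_fam \<Longrightarrow> B \<in> T_fam \<Longrightarrow> \<not> first_equiv A B \<and> \<not> second_equiv A B"
proof -
  assume "A \<in> S_fam" "B \<in> T_fam"
  then obtain e x a b where A: "A = S_t e x" and B: "B = T_t a b" and a: "a \<noteq> 0" by (auto simp: S_fam_def T_fam_def)
  have f: "\<not> first_equiv A B"
  proof
    assume "first_equiv A B"
    from first_blk[OF this] obtain B1 B2 where d: "det2 B1 \<noteq> 0" and h: "B2 * blk A 1 0 = blk B 1 0 * B1"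
      unfolding A B using zb_S zb_T by blast
    have "det2 (blk B 1 0) = 0" using nz_cancel[OF d] h by (simp add: A S_blk S_blk1)
    then show False using a by (simp add: B dT_R dT_R1)
  qed
  have s: "\<not> second_equiv A B"
  proof
    assume "second_equiv A B"
    from second_blk[OF this] obtain B1 B2 where d: "det2 B1 \<noteq> 0" and h: "B2 * blk A 1 0 = blk B 0 1 * B1"
      unfolding A B using zb_S zb_T by blast
    have "det2 (blk B 0 1) = 0" using nz_cancel[OF d] h by (simp add: A S_blk S_blk1)
    then show False using dT_Q_nz[OF a] by (simp add: B)
  qed
  show ?thesis using f s by blast
qed

lemma no_DS: "A \<in> D_fam \<Longrightarrow> B \<in> S_fam \<Longrightarrow> \<not> first_equiv A B \<and> \<not> second_equiv A B"
proof -
  assume "A \<in> D_fam" "B \<in> S_fam"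
  then obtain e x y where B: "B = S_t e x" and A: "A = D_t y" and y: "y \<noteq> 0" by (auto simp: S_fam_def D_fam_def)
  have f: "\<not> first_equiv A B"
  proof
    assume "first_equiv A B"
    from first_blk[OF this] obtain B1 B2 where "det2 B2 \<noteq> 0" "B2 * blk A 1 0 = blk B 1 0 * B1"
      unfolding A B using zb_S zb_D by blast
    then show False by (simp add: A B S_blk S_blk1 D_blk D_blk1 det0_zero)
  qed
  have s: "\<not> second_equiv A B"
  proof
    assume "second_equiv A B"
    from second_blk[OF this] obtain B1 B2 where "det2 B2 \<noteq> 0" "B2 * blk A 1 0 = blk B 0 1 * B1"
      unfolding A B using zb_S zb_D by blast
    then show False by (simp add: A B S_blk S_blk1 D_blk D_blk1 det0_zero)
  qed
  show ?thesis using f s by blast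
qed

lemma no_TS: "A \<in> T_fam \<Longrightarrow> B \<in> S_fam \<Longrightarrow> \<not> first_equiv A B \<and> \<not> second_equiv A B"
proof -
  assume "A \<in> T_fam" "B \<in> S_fam"
  then obtain e x a b where B: "B = S_t e x" and A: "A = T_t a b" and a: "a \<noteq> 0" by (auto simp: S_fam_def T_fam_def)
  have f: "\<not> first_equiv A B"
  proof
    assume "first_equiv A B"
    from first_blk[OF this] obtain B1 B2 where d: "det2 B2 \<noteq> 0" and h: "B2 * blk A 1 0 = blk B 1 0 * B1"
      unfolding A B using zb_S zb_T by blast
    have "det2 (blk A 1 0) = 0" using nz_cancel2[OF d] h by (simp add: B S_blk S_blk1)
    then show False using a by (simp add: A dT_R dT_R1)
  qed
  have s: "\<not> second_equiv A B"
  proof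
    assume "second_equiv A B"
    from second_blk[OF this] obtain B1 B2 where d: "det2 B2 \<noteq> 0" and h: "B2 * blk A 1 0 = blk B 0 1 * B1"
      unfolding A B using zb_S zb_T by blast
    have "det2 (blk A 1 0) = 0" using nz_cancel2[OF d] h by (simp add: B S_blk S_blk1)
    then show False using a by (simp add: A dT_R dT_R1)
  qed
  show ?thesis using f s by blast
qed

lemma no_DT: "A \<in> D_fam \<Longrightarrow> B \<in> T_fam \<Longrightarrow> \<not> first_equiv A B \<and> \<not> second_equiv A B"
proof -
  assume "A \<in> D_fam" "B \<in> T_fam"
  then obtain y a b where A: "A = D_t y" and B: "B = T_t a b" and a: "a \<noteq> 0" by (auto simp: D_fam_def T_fam_def)
  have f: "\<not> first_equiv A B"
  proof
    assume "first_equiv A B"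
    from first_blk[OF this] obtain B1 B2 where d: "det2 B1 \<noteq> 0" and h: "B1 * blk A 0 0 = blk B 0 0 * B1"
      unfolding A B using zb_D zb_T by blast
    have "M2 y 0 0 y * B1 = blk B 0 0 * B1" using h by (simp add: A D_blk D_blk1 scal_comm)
    then have "M2 y 0 0 y = blk B 0 0" using cancel_r[OF d] by blast
    then show False by (simp add: B T_blk T_blk1)
  qed
  have s: "\<not> second_equiv A B"
  proof
    assume "second_equiv A B"
    from second_blk[OF this] obtain B1 B2 where d: "det2 B1 \<noteq> 0" and h: "B1 * blk A 0 0 = blk B 1 1 * B1"
      unfolding A B using zb_D zb_T by blast
    have "M2 y 0 0 y * B1 = blk B 1 1 * B1" using h by (simp add: A D_blk D_blk1 scal_comm)
    then have "M2 y 0 0 y = blk B 1 1" using cancel_r[OF d] by blast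
    then show False using a by (simp add: B T_blk T_blk1)
  qed
  show ?thesis using f s by blast
qed

lemma no_TD: "A \<in> T_fam \<Longrightarrow> B \<in> D_fam \<Longrightarrow> \<not> first_equiv A B \<and> \<not> second_equiv A B"
proof -
  assume "A \<in> T_fam" "B \<in> D_fam"
  then obtain y a b where B: "B = D_t y" and A: "A = T_t a b" and a: "a \<noteq> 0" by (auto simp: D_fam_def T_fam_def)
  have f: "\<not> first_equiv A B"
  proof
    assume "first_equiv A B"
    from first_blk[OF this] obtain B1 B2 where d: "det2 B1 \<noteq> 0" and h: "B1 * blk A 0 0 = blk B 0 0 * B1"
      unfolding A B using zb_D zb_T by blast
    have "B1 * blk A 0 0 = B1 * M2 y 0 0 y" using h by (simp add: B D_blk D_blk1 scal_comm)
    then have "blk A 0 0 = M2 y 0 0 y" using cancel_l[OF d] by blast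
    then show False by (simp add: A T_blk T_blk1)
  qed
  have s: "\<not> second_equiv A B"
  proof
    assume "second_equiv A B"
    from second_blk[OF this] obtain B1 B2 where d: "det2 B1 \<noteq> 0" and h: "B1 * blk A 0 0 = blk B 1 1 * B1"
      unfolding A B using zb_D zb_T by blast
    have "B1 * blk A 0 0 = B1 * M2 (-y) 0 0 (-y)" using h by (simp add: B D_blk D_blk1 scal_comm)
    then have "blk A 0 0 = M2 (-y) 0 0 (-y)" using cancel_l[OF d] by blast
    then show False by (simp add: A T_blk T_blk1)
  qed
  show ?thesis using f s by blast
qed

lemma part5: "\<forall>F1 \<in> {S_fam, D_fam, T_fam}. \<forall>F2 \<in> {S_fam, D_fam, T_fam}. F1 \<noteq> F2 \<longrightarrow>
        (\<forall>A \<in> F1. \<forall>B \<in> F2. \<not> first_equiv A B \<and> \<not> second_equiv A B)"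
  using no_SD no_ST no_DS no_TS no_DT no_TD by blast



lemma ThK_zero:
  assumes "zb K"
  shows "blk (Theta * K * Theta) 0 2 = 0" "blk (Theta * K * Theta) 1 2 = 0"
        "blk (Theta * K * Theta) 2 0 = 0" "blk (Theta * K * Theta) 2 1 = 0"
        "Theta * K * Theta \<in> carrier_mat 6 6"
  using zb_Th[OF assms] by (auto simp: zb_def)

lemma sw_conj: "sw * M2 a b c d * sw = M2 d c b a" by (simp add: sw_def)

lemma partS:
  assumes e: "e \<in> {1,-1}" and e': "e' \<in> {1,-1}"
  shows "(first_equiv (S_t e x) (S_t e' x') \<longleftrightarrow> e' = e \<and> x' = x) \<and>
         (second_equiv (S_t e x) (S_t e' x') \<longleftrightarrow> e' = -e \<and> x' = -x)"
proof -
  have f1: "first_equiv (S_t e x) (S_t e' x') \<Longrightarrow> e' = e \<and> x' = x"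
  proof -
    assume "first_equiv (S_t e x) (S_t e' x')"
    from first_blk[OF this zb_S zb_S] obtain B1 B2 where
      d: "det2 B1 \<noteq> 0" "det2 B2 \<noteq> 0" and h1: "B1 * blk (S_t e x) 0 0 = blk (S_t e' x') 0 0 * B1"
      and h4: "B2 * blk (S_t e x) 1 1 = blk (S_t e' x') 1 1 * B2"
      and z0: "M2 (det2 B1) 0 0 (det2 B2) * blk (S_t e x) 2 2 = blk (S_t e' x') 2 2 * M2 (det2 B1) 0 0 (det2 B2)"
      by blast
    have h: "B1 * rot = rot * B1" "B2 * rot = rot * B2" using h1 h4 by (simp_all add: S_blk S_blk1)
    have z: "M2 (det2 B1) 0 0 (det2 B2) * M2 x (-e*(x^2+1)) e (-x) = M2 x' (-e'*(x'^2+1)) e' (-x') * M2 (det2 B1) 0 0 (det2 B2)"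
      using z0 by (simp only: S_blk)
    have p: "det2 B1 > 0" "det2 B2 > 0" using rot_pos h d by auto
    have z1: "det2 B1 * x = x' * det2 B1" "det2 B2 * e = e' * det2 B1" using z by simp_all
    have "x' = x" using z1(1) p by simp
    moreover have "e' = e"
    proof (rule ccontr)
      assume "e' \<noteq> e"
      then have "e' = - e" using e e' by auto
      then have "e * (det2 B2 + det2 B1) = 0" using z1(2) by (simp add: algebra_simps)
      then show False using p e by (auto simp: add_pos_pos)
    qed
    ultimately show ?thesis by simp
  qed
  have s1: "second_equiv (S_t e x) (S_t e' x') \<Longrightarrow> e' = -e \<and> x' = -x"
  proof -
    assume "second_equiv (S_t e x) (S_t e' x')"
    from second_blk[OF this zb_S zb_S] obtain B1 B2 where
      d: "det2 B1 \<noteq> 0" "det2 B2 \<noteq> 0" and h1: "B1 * blk (S_t e x) 0 0 = blk (S_t e' x') 1 1 * B1"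
      and h4: "B2 * blk (S_t e x) 1 1 = blk (S_t e' x') 0 0 * B2"
      and z0: "M2 (det2 B1) 0 0 (det2 B2) * blk (S_t e x) 2 2 = (sw * blk (S_t e' x') 2 2 * sw) * M2 (det2 B1) 0 0 (det2 B2)"
      by blast
    have h: "B1 * rot = rot * B1" "B2 * rot = rot * B2" using h1 h4 by (simp_all add: S_blk S_blk1)
    have z: "M2 (det2 B1) 0 0 (det2 B2) * M2 x (-e*(x^2+1)) e (-x) = (sw * M2 x' (-e'*(x'^2+1)) e' (-x') * sw) * M2 (det2 B1) 0 0 (det2 B2)"
      using z0 by (simp only: S_blk)
    have p: "det2 B1 > 0" "det2 B2 > 0" using rot_pos h d by auto
    have z1: "det2 B1 * x = - x' * det2 B1" "det2 B2 * e = - (e' * (x'^2+1)) * det2 B1" using z by (simp_all add: sw_conj)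
    have "det2 B1 * (x + x') = 0" using z1(1) by (simp add: algebra_simps)
    then have "x' = - x" using p by simp
    moreover have "e' = - e"
    proof (rule ccontr)
      assume "e' \<noteq> - e"
      then have "e' = e" using e e' by auto
      then have "e * (det2 B2 + (x'^2+1) * det2 B1) = 0" using z1(2) by (simp add: algebra_simps)
      moreover have "det2 B2 + (x'^2+1) * det2 B1 > 0"
      proof -
        have "x'^2 + 1 > (0::real)" by (simp add: add_nonneg_pos)
        then have "(x'^2+1) * det2 B1 > 0" using p by simp
        then show ?thesis using p by linarith
      qed
      ultimately show False using e by auto
    qed
    ultimately show ?thesis by simp
  qed
  have s2: "second_equiv (S_t e x) (S_t (-e) (-x))"
  proof -
    define B2 where "B2 = sm (sqrt (x^2+1)) 1"
    have dB2: "det2 B2 = x^2 + 1" by (simp add: B2_def det2_sm)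
    have "x^2 + 1 > (0::real)" by (simp add: add_nonneg_pos)
    then have pos: "x^2 + 1 \<noteq> (0::real)" by simp
    note Kz = ThK_zero[OF zb_S[of "-e" "-x"]]
    have ee: "e * e = 1" using e by auto
    have "\<exists>P. first_kind P \<and> equiv_by P (S_t e x) (Theta * S_t (-e) (-x) * Theta)"
    proof (rule core[of _ _ 1 B2])
      show "S_t e x \<in> carrier_mat 6 6" by (rule S_carrier)
      show "Theta * S_t (- e) (- x) * Theta \<in> carrier_mat 6 6" by (rule Kz(5))
      show "blk (S_t e x) 0 2 = 0" "blk (S_t e x) 1 2 = 0" by (simp_all add: S_blk S_blk1)
      show "blk (Theta * S_t (- e) (- x) * Theta) 0 2 = 0" "blk (Theta * S_t (- e) (- x) * Theta) 1 2 = 0"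
        "blk (Theta * S_t (- e) (- x) * Theta) 2 0 = 0" "blk (Theta * S_t (- e) (- x) * Theta) 2 1 = 0"
        by (rule Kz)+
      show "blk (S_t e x) 2 2 * blk (S_t e x) 2 2 = -1"
        using ee by (simp add: S_blk S_blk1 one_m2_def power2_eq_square algebra_simps)
      show "blk (S_t e x) 2 0 * blk (S_t e x) 0 0 + blk (S_t e x) 2 1 * blk (S_t e x) 1 0 + blk (S_t e x) 2 2 * blk (S_t e x) 2 0 = 0"
        "blk (S_t e x) 2 0 * blk (S_t e x) 0 1 + blk (S_t e x) 2 1 * blk (S_t e x) 1 1 + blk (S_t e x) 2 2 * blk (S_t e x) 2 1 = 0"
        by (simp_all add: S_blk S_blk1)
      show "det2 (1::m2) \<noteq> 0" by simp
      show "det2 B2 \<noteq> 0" using dB2 pos by simp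
      show "1 * blk (S_t e x) 0 0 = blk (Theta * S_t (- e) (- x) * Theta) 0 0 * 1"
        "1 * blk (S_t e x) 0 1 = blk (Theta * S_t (- e) (- x) * Theta) 0 1 * B2"
        "B2 * blk (S_t e x) 1 0 = blk (Theta * S_t (- e) (- x) * Theta) 1 0 * 1"
        by (simp_all add: ThK_blk[OF S_carrier] ThK_blk1[OF S_carrier] S_blk S_blk1)
      show "B2 * blk (S_t e x) 1 1 = blk (Theta * S_t (- e) (- x) * Theta) 1 1 * B2"
        by (simp add: ThK_blk[OF S_carrier] ThK_blk1[OF S_carrier] S_blk S_blk1 B2_def rot_def one_m2_def)
      show "M2 (det2 1) 0 0 (det2 B2) * blk (S_t e x) 2 2 = blk (Theta * S_t (- e) (- x) * Theta) 2 2 * M2 (det2 1) 0 0 (det2 B2)"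
        by (simp add: ThK_blk[OF S_carrier] ThK_blk1[OF S_carrier] S_blk S_blk1 dB2 sw_def algebra_simps)
    qed
    then obtain P where "first_kind P" "equiv_by P (S_t e x) (Theta * S_t (-e) (-x) * Theta)" by blast
    then show ?thesis using second_of_first S_carrier by blast
  qed
  show ?thesis using f1 s1 s2 first_refl[OF S_carrier] by auto
qed



lemma partD:
  assumes x: "x \<noteq> 0" and x': "x' \<noteq> 0"
  shows "(first_equiv (D_t x) (D_t x') \<longleftrightarrow> x' = x) \<and> (second_equiv (D_t x) (D_t x') \<longleftrightarrow> x' = -x)"
proof -
  have f1: "first_equiv (D_t x) (D_t x') \<Longrightarrow> x' = x"
  proof -
    assume "first_equiv (D_t x) (D_t x')"
    from first_blk[OF this zb_D zb_D] obtain B1 B2 where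
      d: "det2 B1 \<noteq> 0" and h1: "B1 * blk (D_t x) 0 0 = blk (D_t x') 0 0 * B1" by blast
    have "B1 * M2 x 0 0 x = B1 * M2 x' 0 0 x'" using h1 by (simp add: D_blk scal_comm)
    then have "M2 x 0 0 x = M2 x' 0 0 x'" using cancel_l[OF d] by blast
    then show ?thesis by simp
  qed
  have s1: "second_equiv (D_t x) (D_t x') \<Longrightarrow> x' = -x"
  proof -
    assume "second_equiv (D_t x) (D_t x')"
    from second_blk[OF this zb_D zb_D] obtain B1 B2 where
      d: "det2 B1 \<noteq> 0" and h1: "B1 * blk (D_t x) 0 0 = blk (D_t x') 1 1 * B1" by blast
    have "B1 * M2 x 0 0 x = B1 * M2 (-x') 0 0 (-x')" using h1 by (simp add: D_blk D_blk1 scal_comm)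
    then have "M2 x 0 0 x = M2 (-x') 0 0 (-x')" using cancel_l[OF d] by blast
    then show ?thesis by simp
  qed
  have s2: "second_equiv (D_t x) (D_t (-x))"
  proof -
    define B2 where "B2 = M2 (-(x^2+1)) 0 0 (-(x^2+1))"
    have "x^2 + 1 > (0::real)" by (simp add: add_nonneg_pos)
    then have pos: "x^2 + 1 \<noteq> (0::real)" by simp
    have dB2: "det2 B2 = (x^2 + 1)^2" by (simp add: B2_def power2_eq_square algebra_simps)
    note Kz = ThK_zero[OF zb_D[of "-x"]]
    have "\<exists>P. first_kind P \<and> equiv_by P (D_t x) (Theta * D_t (-x) * Theta)"
    proof (rule core[of _ _ 1 B2])
      show "D_t x \<in> carrier_mat 6 6" by (rule D_carrier)
      show "Theta * D_t (- x) * Theta \<in> carrier_mat 6 6" by (rule Kz(5))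
      show "blk (D_t x) 0 2 = 0" "blk (D_t x) 1 2 = 0" by (simp_all add: D_blk D_blk1)
      show "blk (Theta * D_t (- x) * Theta) 0 2 = 0" "blk (Theta * D_t (- x) * Theta) 1 2 = 0"
        "blk (Theta * D_t (- x) * Theta) 2 0 = 0" "blk (Theta * D_t (- x) * Theta) 2 1 = 0"
        by (rule Kz)+
      show "blk (D_t x) 2 2 * blk (D_t x) 2 2 = -1"
        using x by (simp add: D_blk one_m2_def field_simps power2_eq_square)
      show "blk (D_t x) 2 0 * blk (D_t x) 0 0 + blk (D_t x) 2 1 * blk (D_t x) 1 0 + blk (D_t x) 2 2 * blk (D_t x) 2 0 = 0"
        "blk (D_t x) 2 0 * blk (D_t x) 0 1 + blk (D_t x) 2 1 * blk (D_t x) 1 1 + blk (D_t x) 2 2 * blk (D_t x) 2 1 = 0"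
        by (simp_all add: D_blk D_blk1)
      show "det2 (1::m2) \<noteq> 0" by simp
      show "det2 B2 \<noteq> 0" using dB2 pos by simp
      show "1 * blk (D_t x) 0 0 = blk (Theta * D_t (- x) * Theta) 0 0 * 1"
        "1 * blk (D_t x) 0 1 = blk (Theta * D_t (- x) * Theta) 0 1 * B2"
        "B2 * blk (D_t x) 1 0 = blk (Theta * D_t (- x) * Theta) 1 0 * 1"
        "B2 * blk (D_t x) 1 1 = blk (Theta * D_t (- x) * Theta) 1 1 * B2"
        by (simp_all add: ThK_blk[OF D_carrier] ThK_blk1[OF D_carrier] D_blk D_blk1 B2_def one_m2_def)
      show "M2 (det2 1) 0 0 (det2 B2) * blk (D_t x) 2 2 = blk (Theta * D_t (- x) * Theta) 2 2 * M2 (det2 1) 0 0 (det2 B2)"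
        using x by (simp add: ThK_blk[OF D_carrier] D_blk dB2 sw_def field_simps power2_eq_square)
    qed
    then obtain P where "first_kind P" "equiv_by P (D_t x) (Theta * D_t (-x) * Theta)" by blast
    then show ?thesis using second_of_first D_carrier by blast
  qed
  show ?thesis using f1 s1 s2 first_refl[OF D_carrier] by auto
qed



lemma partT:
  assumes a: "a \<noteq> 0" and a': "a' \<noteq> 0"
  shows "(first_equiv (T_t a b) (T_t a' b') \<longleftrightarrow> a' = a \<and> b' = b) \<and>
         (second_equiv (T_t a b) (T_t a' b') \<longleftrightarrow> a' = -a \<and> b' = -b)"
proof -
  have f1: "first_equiv (T_t a b) (T_t a' b') \<Longrightarrow> a' = a \<and> b' = b"
  proof -
    assume "first_equiv (T_t a b) (T_t a' b')"
    from first_blk[OF this zb_T zb_T] obtain B1 B2 where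
      d: "det2 B1 \<noteq> 0" and h1: "B1 * blk (T_t a b) 0 0 = blk (T_t a' b') 0 0 * B1" by blast
    note s = sim_det_tr[OF d h1]
    have "a' = a" using s(2) by (simp add: T_blk)
    moreover have "b * a = b' * a'" using s(1) by (simp add: T_blk)
    ultimately show ?thesis using a by simp
  qed
  have s1: "second_equiv (T_t a b) (T_t a' b') \<Longrightarrow> a' = -a \<and> b' = -b"
  proof -
    assume "second_equiv (T_t a b) (T_t a' b')"
    from second_blk[OF this zb_T zb_T] obtain B1 B2 where
      d: "det2 B1 \<noteq> 0" and h1: "B1 * blk (T_t a b) 0 0 = blk (T_t a' b') 1 1 * B1" by blast
    note s = sim_det_tr[OF d h1]
    have aa: "a' = - a" using s(2) by (simp add: T_blk T_blk1)
    moreover have ba: "b * a = a' * b'" using s(1) by (simp add: T_blk T_blk1)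
    ultimately have "a * (b + b') = 0" by (simp add: algebra_simps)
    then show ?thesis using a aa by (simp add: add_eq_0_iff)
  qed
  have s2: "second_equiv (T_t a b) (T_t (-a) (-b))"
  proof -
    define K where "K = Theta * T_t (-a) (-b) * Theta"
    note Kz = ThK_zero[OF zb_T[of "-a" "-b"], folded K_def]
    have Kb: "\<And>r c. blk K r c = blk (Theta * T_t (-a) (-b) * Theta) r c" by (simp add: K_def)
    note tb = ThK_blk[OF T_carrier, of "-a" "-b", folded K_def]
    note tb1 = ThK_blk1[OF T_carrier, of "-a" "-b", folded K_def]
    define B2 where "B2 = M2 0 1 (-1/a) 0"
    have "a^2 > 0" using a by simp
    have pa: "(b*a - 1)^2 + a^2 \<noteq> 0" using a by (simp add: add_nonneg_pos)
    have "\<exists>P. first_kind P \<and> equiv_by P (T_t a b) K"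
    proof (rule case_b[of "T_t a b" K])
      show "T_t a b \<in> carrier_mat 6 6" by (rule T_carrier)
      show "K \<in> carrier_mat 6 6" by (rule Kz(5))
      show "blk (T_t a b) 0 2 = 0" "blk (T_t a b) 1 2 = 0" by (simp_all add: T_blk T_blk1)
      show "blk K 0 2 = 0" "blk K 1 2 = 0" "blk K 2 0 = 0" "blk K 2 1 = 0" by (rule Kz)+
      show "blk (T_t a b) 2 2 * blk (T_t a b) 2 2 = -1"
        using a by (simp add: T_blk one_m2_def field_simps power2_eq_square)
      show "blk (T_t a b) 2 0 * blk (T_t a b) 0 0 + blk (T_t a b) 2 1 * blk (T_t a b) 1 0 + blk (T_t a b) 2 2 * blk (T_t a b) 2 0 = 0"
        "blk (T_t a b) 2 0 * blk (T_t a b) 0 1 + blk (T_t a b) 2 1 * blk (T_t a b) 1 1 + blk (T_t a b) 2 2 * blk (T_t a b) 2 1 = 0"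
        by (simp_all add: T_blk T_blk1)
      show "blk (T_t a b) 0 0 * blk (T_t a b) 0 1 + blk (T_t a b) 0 1 * blk (T_t a b) 1 1 = 0"
        using a by (simp add: T_blk T_blk1 zero_m2_def field_simps power2_eq_square)
      show "blk (T_t a b) 1 0 * blk (T_t a b) 0 1 + blk (T_t a b) 1 1 * blk (T_t a b) 1 1 = -1"
        using a by (simp add: T_blk T_blk1 one_m2_def field_simps power2_eq_square)
      show "det2 (blk (T_t a b) 0 0) - 1 = tr2 (blk (T_t a b) 0 0) * (-(b*a-1)/a)"
        "det2 (blk (T_t a b) 1 0) = tr2 (blk (T_t a b) 0 0) * 1"
        "det2 (blk (T_t a b) 0 1) = tr2 (blk (T_t a b) 1 1) * (-((b*a-2)*b*a+a^2+1)/(a^2))"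
        "det2 (blk (T_t a b) 1 1) - 1 = tr2 (blk (T_t a b) 1 1) * ((b*a-1)/a)"
        "blk (T_t a b) 2 2 = M2 (-(b*a-1)/a) (-((b*a-2)*b*a+a^2+1)/(a^2)) 1 ((b*a-1)/a)"
        using a by (simp_all add: T_blk T_blk1 field_simps power2_eq_square)
      show "tr2 (blk (T_t a b) 1 1) \<noteq> 0" using a by (simp add: T_blk T_blk1)
      show "det2 (blk (T_t a b) 0 1) \<noteq> 0" using dT_Q_nz[OF a] .
      show "blk K 0 0 * blk K 0 1 + blk K 0 1 * blk K 1 1 = 0"
        using a by (simp add: tb tb1 T_blk T_blk1 zero_m2_def field_simps power2_eq_square)
      show "blk K 1 0 * blk K 0 1 + blk K 1 1 * blk K 1 1 = -1"
        using a by (simp add: tb tb1 T_blk T_blk1 one_m2_def field_simps power2_eq_square)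
      show "det2 (blk K 0 0) - 1 = tr2 (blk K 0 0) * ((-b*-a-1)/(-a))"
        "det2 (blk K 1 0) = tr2 (blk K 0 0) * (-((-b*-a-2)*-b*-a+(-a)^2+1)/((-a)^2))"
        "det2 (blk K 0 1) = tr2 (blk K 1 1) * 1"
        "det2 (blk K 1 1) - 1 = tr2 (blk K 1 1) * (-(-b*-a-1)/(-a))"
        "blk K 2 2 = M2 ((-b*-a-1)/(-a)) 1 (-((-b*-a-2)*-b*-a+(-a)^2+1)/((-a)^2)) (-(-b*-a-1)/(-a))"
        using a by (simp_all add: tb tb1 T_blk T_blk1 sw_def field_simps power2_eq_square)
      show "det2 (blk K 0 1) \<noteq> 0" using a by (simp add: tb tb1 T_blk T_blk1)
      show "det2 B2 \<noteq> 0" using a by (simp add: B2_def)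
      show "B2 * blk (T_t a b) 1 1 = blk K 1 1 * B2"
        using a by (simp add: tb tb1 T_blk T_blk1 B2_def field_simps)
    qed
    then obtain P where "first_kind P" "equiv_by P (T_t a b) K" by blast
    then show ?thesis using second_of_first T_carrier unfolding K_def by blast
  qed
  show ?thesis using f1 s1 s2 first_refl[OF T_carrier] by auto
qed



lemma cs:
  assumes "M2 a b c d * M2 a b c d = -1"
  shows "d = -a" "a*a + b*c = -1" "b \<noteq> 0" "c \<noteq> 0"
proof -
  have e: "a*a + b*c = -1" "a*b + b*d = 0" "c*a + d*c = 0" "c*b + d*d = -1"
    using assms by (simp_all add: one_m2_def)
  have "b * c < 0" using e(1) by (smt (verit) zero_le_square)
  then show bc: "b \<noteq> 0" "c \<noteq> 0" by auto
  have "b * (a + d) = 0" using e(2) by (simp add: algebra_simps)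
  then show "d = -a" using bc by simp
  show "a*a + b*c = -1" by (rule e(1))
qed

lemma qdef:
  assumes "M2 m1 m2 m3 m4 * M2 m1 m2 m3 m4 = -1"
    and "v1*(m3*v1 + m4*v2) - v2*(m1*v1 + m2*v2) = 0"
  shows "v1 = 0 \<and> v2 = 0"
proof -
  note c = cs[OF assms(1)]
  have "m3 * (v1*(m3*v1 + m4*v2) - v2*(m1*v1 + m2*v2)) = (m3*v1 - m1*v2)^2 + (-(m1*m1 + m2*m3)) * v2^2"
    using c(1) by (simp add: algebra_simps power2_eq_square)
  then have "(m3*v1 - m1*v2)^2 + v2^2 = 0" using assms(2) c(2) by simp
  then have "m3*v1 - m1*v2 = 0 \<and> v2 = 0" by (metis sum_power2_eq_zero_iff)
  then have v2: "v2 = 0" by blast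
  have "m3*v1 = 0" using \<open>m3*v1 - m1*v2 = 0 \<and> v2 = 0\<close> by simp
  then show ?thesis using c(4) v2 by simp
qed

lemma kill:
  assumes d: "det2 X = 0" and h: "X * M = - (N * X)" and mm: "M * M = -1"
  shows "X = 0"
proof (cases X; cases M; cases N)
  fix a b c d m1 m2 m3 m4 n1 n2 n3 n4
  assume X: "X = M2 a b c d" and M: "M = M2 m1 m2 m3 m4" and N: "N = M2 n1 n2 n3 n4"
  have ad: "a*d = b*c" using d X by simp
  have e: "a*m1 + b*m3 = -(n1*a + n2*c)" "a*m2 + b*m4 = -(n1*b + n2*d)"
          "c*m1 + d*m3 = -(n3*a + n4*c)" "c*m2 + d*m4 = -(n3*b + n4*d)"
    using h X M N by simp_all
  have mm': "M2 m1 m2 m3 m4 * M2 m1 m2 m3 m4 = -1" using mm M by simp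
  \<comment> \<open>kernel vectors (d,-c) and (-b,a); their images under M stay in the kernel\<close>
  have k: "\<And>v1 v2. a*v1 + b*v2 = 0 \<Longrightarrow> c*v1 + d*v2 = 0 \<Longrightarrow>
      a*(m1*v1 + m2*v2) + b*(m3*v1 + m4*v2) = 0 \<and> c*(m1*v1 + m2*v2) + d*(m3*v1 + m4*v2) = 0"
  proof -
    fix v1 v2 assume v: "a*v1 + b*v2 = 0" "c*v1 + d*v2 = 0"
    have "a*(m1*v1 + m2*v2) + b*(m3*v1 + m4*v2) = (a*m1 + b*m3)*v1 + (a*m2 + b*m4)*v2" by (simp add: algebra_simps)
    also have "\<dots> = (-(n1*a + n2*c))*v1 + (-(n1*b + n2*d))*v2" by (simp only: e(1) e(2))
    also have "\<dots> = -(n1*(a*v1 + b*v2) + n2*(c*v1 + d*v2))" by (simp add: algebra_simps)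
    finally have 1: "a*(m1*v1 + m2*v2) + b*(m3*v1 + m4*v2) = 0" using v by simp
    have "c*(m1*v1 + m2*v2) + d*(m3*v1 + m4*v2) = (c*m1 + d*m3)*v1 + (c*m2 + d*m4)*v2" by (simp add: algebra_simps)
    also have "\<dots> = (-(n3*a + n4*c))*v1 + (-(n3*b + n4*d))*v2" by (simp only: e(3) e(4))
    also have "\<dots> = -(n3*(a*v1 + b*v2) + n4*(c*v1 + d*v2))" by (simp add: algebra_simps)
    finally have 2: "c*(m1*v1 + m2*v2) + d*(m3*v1 + m4*v2) = 0" using v by simp
    show "a*(m1*v1 + m2*v2) + b*(m3*v1 + m4*v2) = 0 \<and> c*(m1*v1 + m2*v2) + d*(m3*v1 + m4*v2) = 0"
      using 1 2 by simp
  qed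
  have dep: "\<And>r1 r2 p1 p2 q1 q2::real. (r1 \<noteq> 0 \<or> r2 \<noteq> 0) \<Longrightarrow> r1*p1 + r2*p2 = 0 \<Longrightarrow> r1*q1 + r2*q2 = 0 \<Longrightarrow> p1*q2 - p2*q1 = 0"
  proof -
    fix r1 r2 p1 p2 q1 q2 :: real assume r: "r1 \<noteq> 0 \<or> r2 \<noteq> 0" and p: "r1*p1 + r2*p2 = 0" and q: "r1*q1 + r2*q2 = 0"
    have "r1 * (p1*q2 - p2*q1) = p1*(r1*q2) - (r1*p2)*q1" by (simp add: algebra_simps)
    also have "\<dots> = - p1*(r2*q2) - (r1*p2)*q1 + p1 * (r1*q2 + r2*q2)" by (simp add: algebra_simps)
    finally have A: "r1 * (p1*q2 - p2*q1) = - p1*(r2*q2) - (r1*p2)*q1 + p1 * (r1*q2 + r2*q2)" .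
    have A': "r1 * (p1*q2 - p2*q1) = 0"
    proof -
      have "r1 * (p1*q2 - p2*q1) = q2 * (r1*p1 + r2*p2) - p2 * (r1*q1 + r2*q2)" by (simp add: algebra_simps)
      then show ?thesis using p q by simp
    qed
    have B': "r2 * (p1*q2 - p2*q1) = 0"
    proof -
      have "r2 * (p1*q2 - p2*q1) = p1 * (r1*q1 + r2*q2) - q1 * (r1*p1 + r2*p2)" by (simp add: algebra_simps)
      then show ?thesis using p q by simp
    qed
    show "p1*q2 - p2*q1 = 0" using r A' B' by auto
  qed
  show "X = 0"
  proof (rule ccontr)
    assume nz: "X \<noteq> 0"
    then have row: "(a \<noteq> 0 \<or> b \<noteq> 0) \<or> (c \<noteq> 0 \<or> d \<noteq> 0)" using X by (auto simp: zero_m2_def)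
    have vz: "\<And>v1 v2. a*v1 + b*v2 = 0 \<Longrightarrow> c*v1 + d*v2 = 0 \<Longrightarrow> v1 = 0 \<and> v2 = 0"
    proof -
      fix v1 v2 assume v: "a*v1 + b*v2 = 0" "c*v1 + d*v2 = 0"
      note kv = k[OF v]
      have "v1*(m3*v1 + m4*v2) - v2*(m1*v1 + m2*v2) = 0"
        using row
      proof
        assume r: "a \<noteq> 0 \<or> b \<noteq> 0"
        show ?thesis using dep[OF r v(1) conjunct1[OF kv]] by (simp add: algebra_simps)
      next
        assume r: "c \<noteq> 0 \<or> d \<noteq> 0"
        show ?thesis using dep[OF r v(2) conjunct2[OF kv]] by (simp add: algebra_simps)
      qed
      then show "v1 = 0 \<and> v2 = 0" using qdef[OF mm'] by blast
    qed
    have "d = 0 \<and> -c = 0" using vz[of d "-c"] ad by (simp add: algebra_simps)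
    moreover have "-b = 0 \<and> a = 0" using vz[of "-b" a] ad by (simp add: algebra_simps)
    ultimately show False using row by simp
  qed
qed



lemma conj_rot:
  assumes "M2 a b c d * M2 a b c d = -1"
  shows "inv2 (M2 1 a 0 c) * M2 a b c d = rot * inv2 (M2 1 a 0 c)" "det2 (M2 1 a 0 c) = c" "c \<noteq> 0"
proof -
  note h = cs[OF assms]
  define V where "V = M2 1 a 0 c"
  have dV: "det2 V \<noteq> 0" using h(4) by (simp add: V_def)
  have MV: "M2 a b c d * V = V * rot" using h(1,2) by (simp add: V_def rot_def algebra_simps)
  have "inv2 V * M2 a b c d = inv2 V * M2 a b c d * (V * inv2 V)" using dV by (simp add: inv2_r)
  also have "\<dots> = inv2 V * (M2 a b c d * V) * inv2 V" by (simp add: mult.assoc)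
  also have "\<dots> = rot * inv2 V" using dV by (simp add: MV mult.assoc inv2_l2)
  finally show "inv2 (M2 1 a 0 c) * M2 a b c d = rot * inv2 (M2 1 a 0 c)" by (simp add: V_def)
  show "det2 (M2 1 a 0 c) = c" by simp
  show "c \<noteq> 0" by (rule h(4))
qed

lemma case_a:
  assumes J: "J \<in> carrier_mat 6 6"
    and J0: "blk J 0 2 = 0" "blk J 1 2 = 0"
    and ZZ: "blk J 2 2 * blk J 2 2 = -1"
    and C: "blk J 2 0 * blk J 0 0 + blk J 2 1 * blk J 1 0 + blk J 2 2 * blk J 2 0 = 0"
           "blk J 2 0 * blk J 0 1 + blk J 2 1 * blk J 1 1 + blk J 2 2 * blk J 2 1 = 0"
    and Q0: "blk J 0 1 = 0" and R0: "blk J 1 0 = 0"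
    and PP: "blk J 0 0 * blk J 0 0 = -1" and SS: "blk J 1 1 * blk J 1 1 = -1"
  shows "\<exists>P. first_kind P \<and> (\<exists>K\<in>S_fam. equiv_by P J K)"
proof -
  obtain p1 p2 p3 p4 where P: "blk J 0 0 = M2 p1 p2 p3 p4" by (cases "blk J 0 0")
  obtain s1 s2 s3 s4 where S: "blk J 1 1 = M2 s1 s2 s3 s4" by (cases "blk J 1 1")
  obtain z1 z2 z3 z4 where Z: "blk J 2 2 = M2 z1 z2 z3 z4" by (cases "blk J 2 2")
  note cP = conj_rot[OF PP[unfolded P]]
  note cS = conj_rot[OF SS[unfolded S]]
  note cZ = cs[OF ZZ[unfolded Z]]
  define t where "t = s3 / (z3 * p3)"
  have t0: "t \<noteq> 0" using cP(3) cS(3) cZ(4) by (simp add: t_def)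
  define e :: real where "e = (if t > 0 then 1 else -1)"
  define m where "m = e * t"
  have m0: "m > 0" using t0 by (auto simp: m_def e_def)
  have ee: "e * e = 1" "e \<in> {1, -1}" by (auto simp: e_def)
  define B1 where "B1 = inv2 (M2 1 p1 0 p3)"
  define B2 where "B2 = sm (sqrt m) (inv2 (M2 1 s1 0 s3))"
  have dB1: "det2 B1 = 1 / p3" using cP(3) by (simp add: B1_def det2_inv2)
  have dB2: "det2 B2 = m / s3" using cS(3) m0 by (simp add: B2_def det2_sm det2_inv2)
  define K where "K = S_t e z1"
  have KS: "K \<in> S_fam" using ee(2) by (auto simp: K_def S_fam_def)
  have "\<exists>P. first_kind P \<and> equiv_by P J K"
  proof (rule core[of J K B1 B2, OF J _ J0 _ _ _ _ ZZ C])
    show "K \<in> carrier_mat 6 6" by (simp add: K_def S_carrier)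
    show "blk K 0 2 = 0" "blk K 1 2 = 0" "blk K 2 0 = 0" "blk K 2 1 = 0" by (simp_all add: K_def S_blk S_blk1)
    show "det2 B1 \<noteq> 0" using dB1 cP(3) by simp
    show "det2 B2 \<noteq> 0" using dB2 cS(3) m0 by simp
    show "B1 * blk J 0 0 = blk K 0 0 * B1" using cP(1) by (simp add: P B1_def K_def S_blk S_blk1)
    show "B1 * blk J 0 1 = blk K 0 1 * B2" using Q0 by (simp add: K_def S_blk S_blk1)
    show "B2 * blk J 1 0 = blk K 1 0 * B1" using R0 by (simp add: K_def S_blk S_blk1)
    show "B2 * blk J 1 1 = blk K 1 1 * B2"
      using cS(1) by (simp add: S[unfolded One_nat_def] B2_def K_def S_blk S_blk1 sm_mult_left sm_mult_right)
    have z2: "z2 = - (z1 * z1 + 1) / z3" using cZ(2,4) by (simp add: field_simps)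
    show "M2 (det2 B1) 0 0 (det2 B2) * blk J 2 2 = blk K 2 2 * M2 (det2 B1) 0 0 (det2 B2)"
      unfolding Z dB1 dB2 using cP(3) cS(3) cZ(4) ee(1) cZ(1)
      by (simp add: K_def S_blk S_blk1 m_def t_def z2 field_simps power2_eq_square)
  qed
  then show ?thesis using KS by blast
qed



lemma D_props:
  assumes x: "x \<noteq> 0"
  shows "blk (D_t x) 0 0 * blk (D_t x) 0 1 + blk (D_t x) 0 1 * blk (D_t x) 1 1 = 0"
  "blk (D_t x) 1 0 * blk (D_t x) 0 1 + blk (D_t x) 1 1 * blk (D_t x) 1 1 = -1"
  "det2 (blk (D_t x) 0 0) - 1 = tr2 (blk (D_t x) 0 0) * ((x^2-1)/(2*x))"
  "det2 (blk (D_t x) 1 0) = tr2 (blk (D_t x) 0 0) * (1/(2*x))"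
  "det2 (blk (D_t x) 0 1) = tr2 (blk (D_t x) 1 1) * (-((x^2+1)^2)/(2*x))"
  "det2 (blk (D_t x) 1 1) - 1 = tr2 (blk (D_t x) 1 1) * ((1-x^2)/(2*x))"
  "blk (D_t x) 2 2 = M2 ((x^2-1)/(2*x)) (-((x^2+1)^2)/(2*x)) (1/(2*x)) ((1-x^2)/(2*x))"
  "det2 (blk (D_t x) 0 1) \<noteq> 0"
proof -
  have "x^2 + 1 > (0::real)" by (simp add: add_nonneg_pos)
  then have p: "x^2 + 1 \<noteq> (0::real)" by simp
  show "blk (D_t x) 0 0 * blk (D_t x) 0 1 + blk (D_t x) 0 1 * blk (D_t x) 1 1 = 0"
    "blk (D_t x) 1 0 * blk (D_t x) 0 1 + blk (D_t x) 1 1 * blk (D_t x) 1 1 = -1"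
    by (simp_all add: D_blk D_blk1 zero_m2_def one_m2_def algebra_simps power2_eq_square)
  show "det2 (blk (D_t x) 0 0) - 1 = tr2 (blk (D_t x) 0 0) * ((x^2-1)/(2*x))"
    "det2 (blk (D_t x) 1 0) = tr2 (blk (D_t x) 0 0) * (1/(2*x))"
    "det2 (blk (D_t x) 0 1) = tr2 (blk (D_t x) 1 1) * (-((x^2+1)^2)/(2*x))"
    "det2 (blk (D_t x) 1 1) - 1 = tr2 (blk (D_t x) 1 1) * ((1-x^2)/(2*x))"
    "blk (D_t x) 2 2 = M2 ((x^2-1)/(2*x)) (-((x^2+1)^2)/(2*x)) (1/(2*x)) ((1-x^2)/(2*x))"
    using x by (simp_all add: D_blk D_blk1 one_m2_def field_simps power2_eq_square)
  have "det2 (blk (D_t x) 0 1) = (x^2+1)*(x^2+1)" by (simp add: D_blk D_blk1 algebra_simps)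
  then show "det2 (blk (D_t x) 0 1) \<noteq> 0" using p by simp
qed

lemma T_props:
  assumes a: "a \<noteq> 0"
  shows "blk (T_t a b) 0 0 * blk (T_t a b) 0 1 + blk (T_t a b) 0 1 * blk (T_t a b) 1 1 = 0"
    "blk (T_t a b) 1 0 * blk (T_t a b) 0 1 + blk (T_t a b) 1 1 * blk (T_t a b) 1 1 = -1"
    "det2 (blk (T_t a b) 0 0) - 1 = tr2 (blk (T_t a b) 0 0) * (-(b*a-1)/a)"
    "det2 (blk (T_t a b) 1 0) = tr2 (blk (T_t a b) 0 0) * 1"
    "det2 (blk (T_t a b) 0 1) = tr2 (blk (T_t a b) 1 1) * (-((b*a-2)*b*a+a^2+1)/(a^2))"
    "det2 (blk (T_t a b) 1 1) - 1 = tr2 (blk (T_t a b) 1 1) * ((b*a-1)/a)"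
    "blk (T_t a b) 2 2 = M2 (-(b*a-1)/a) (-((b*a-2)*b*a+a^2+1)/(a^2)) 1 ((b*a-1)/a)"
  using a by (simp_all add: T_blk T_blk1 zero_m2_def one_m2_def field_simps power2_eq_square)

lemma cyc:
  "M2 s1 s2 s3 s4 * M2 w1 (s1*w1 + s2*w2) w2 (s3*w1 + s4*w2)
   = M2 w1 (s1*w1 + s2*w2) w2 (s3*w1 + s4*w2) * M2 0 (-(s1*s4 - s2*s3)) 1 (s1 + s4)"
  by (simp add: algebra_simps)

lemma part1:
  assumes I: "integrable_cx J"
  shows "\<exists>P. first_kind P \<and> (\<exists>K \<in> S_fam \<union> D_fam \<union> T_fam. equiv_by P J K)"
proof -
  note ib = integ_blocks[OF I]
  define P where "P = blk J 0 0"
  define Q where "Q = blk J 0 1"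
  define R where "R = blk J 1 0"
  define S where "S = blk J 1 1"
  show ?thesis
  proof (cases "tr2 S = 0")
    case True
    have dQ: "det2 Q = 0" using ib(13) True by (simp add: Q_def S_def)
    have dS: "det2 S = 1" using ib(14) True by (simp add: S_def)
    have SS: "S * S = -1" using cayley[of S] True dS by (simp add: one_m2_def)
    have QS: "Q * S = - (P * Q)" using ib(5) by (simp add: P_def Q_def S_def eq_neg_iff_add_eq_0 add.commute)
    have Q0: "Q = 0" by (rule kill[OF dQ QS SS])
    have PP: "P * P = -1" using ib(4) Q0 by (simp add: P_def Q_def)
    obtain p1 p2 p3 p4 where Pe: "P = M2 p1 p2 p3 p4" by (cases P)
    have "tr2 P = 0" using cs(1)[OF PP[unfolded Pe]] Pe by simp
    then have dR: "det2 R = 0" using ib(12) by (simp add: P_def R_def)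
    have RP: "R * P = - (S * R)" using ib(6) by (simp add: P_def R_def S_def eq_neg_iff_add_eq_0)
    have R0: "R = 0" by (rule kill[OF dR RP PP])
    have "\<exists>P. first_kind P \<and> (\<exists>K\<in>S_fam. equiv_by P J K)"
      by (rule case_a[OF ib(1,2,3,8,9,10)]) (use Q0 R0 PP SS in \<open>simp_all add: P_def Q_def R_def S_def\<close>)
    then show ?thesis by blast
  next
    case False
    obtain z11 z12 z21 z22 where Z: "blk J 2 2 = M2 z11 z12 z21 z22" by (cases "blk J 2 2")
    have zz: "z11 = J$$(4,4)" "z12 = J$$(4,5)" "z21 = J$$(5,4)" "z22 = J$$(5,5)" using ib(15) Z by simp_all
    have "z12 \<noteq> 0" using cs(3)[OF ib(8)[unfolded Z]] .
    then have dQ: "det2 Q \<noteq> 0" using ib(13) False zz by (simp add: Q_def S_def)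
    obtain s1 s2 s3 s4 where Se: "S = M2 s1 s2 s3 s4" by (cases S)
    note nJ = ib(11,12,13,14)[folded zz] ib(15)[folded zz]
    show ?thesis
    proof (cases "s2 = 0 \<and> s3 = 0 \<and> s1 = s4")
      case True
      define x where "x = - s1"
      have x0: "x \<noteq> 0" using False True Se by (auto simp: x_def)
      note Dp = D_props[OF x0]
      have "\<exists>P. first_kind P \<and> equiv_by P J (D_t x)"
      proof (rule case_b[OF ib(1) D_carrier ib(2,3) _ _ _ _ ib(8,9,10,5,7) nJ _ _ Dp(1-7) Dp(8), of 1])
        show "blk (D_t x) 0 2 = 0" "blk (D_t x) 1 2 = 0" "blk (D_t x) 2 0 = 0" "blk (D_t x) 2 1 = 0"
          by (simp_all add: D_blk D_blk1)
        show "tr2 (blk J 1 1) \<noteq> 0" using False by (simp add: S_def)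
        show "det2 (blk J 0 1) \<noteq> 0" using dQ by (simp add: Q_def)
        show "det2 (1::m2) \<noteq> 0" by simp
        show "1 * blk J 1 1 = blk (D_t x) 1 1 * 1"
          using True Se by (simp add: S_def[symmetric] S_def[symmetric, unfolded One_nat_def] D_blk D_blk1 x_def)
      qed
      moreover have "D_t x \<in> D_fam" using x0 by (auto simp: D_fam_def)
      ultimately show ?thesis by blast
    next
      case nsc: False
      define a where "a = tr2 S"
      define b where "b = det2 S / a"
      have a0: "a \<noteq> 0" using False by (simp add: a_def)
      define w1 :: real where "w1 = (if s3 \<noteq> 0 then 1 else if s2 \<noteq> 0 then 0 else 1)"
      define w2 :: real where "w2 = (if s3 \<noteq> 0 then 0 else 1)"
      define W where "W = M2 w1 (s1*w1 + s2*w2) w2 (s3*w1 + s4*w2)"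
      have dW: "det2 W \<noteq> 0"
        using nsc by (auto simp: W_def w1_def w2_def algebra_simps)
      define Cm where "Cm = M2 0 (-(s1*s4 - s2*s3)) 1 (s1 + s4)"
      have SW: "S * W = W * Cm" unfolding Se W_def Cm_def by (rule cyc)
      have iWS: "inv2 W * S = Cm * inv2 W"
      proof -
        have "inv2 W * S = inv2 W * S * (W * inv2 W)" using dW by (simp add: inv2_r)
        also have "\<dots> = inv2 W * (S * W) * inv2 W" by (simp add: mult.assoc)
        also have "\<dots> = Cm * inv2 W" using dW by (simp add: SW mult.assoc inv2_l2)
        finally show ?thesis .
      qed
      define U where "U = M2 0 (-a) 1 0"
      have UC: "U * Cm = blk (T_t a b) 1 1 * U"
        using a0 by (simp add: U_def Cm_def T_blk T_blk1 a_def b_def Se field_simps)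
      define B2 where "B2 = U * inv2 W"
      have dB2: "det2 B2 \<noteq> 0" using dW a0 by (simp add: B2_def det2_mult det2_inv2 U_def)
      have "B2 * S = U * (inv2 W * S)" by (simp add: B2_def mult.assoc)
      also have "\<dots> = U * (Cm * inv2 W)" using iWS by simp
      also have "\<dots> = (U * Cm) * inv2 W" by (simp add: mult.assoc)
      also have "\<dots> = blk (T_t a b) 1 1 * B2" using UC by (simp add: B2_def mult.assoc)
      finally have hB2: "B2 * blk J 1 1 = blk (T_t a b) 1 1 * B2" by (simp add: S_def)
      note Tp = T_props[OF a0, of b]
      have "\<exists>P. first_kind P \<and> equiv_by P J (T_t a b)"
      proof (rule case_b[OF ib(1) T_carrier ib(2,3) _ _ _ _ ib(8,9,10,5,7) nJ _ _ Tp _ dB2 hB2])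
        show "blk (T_t a b) 0 2 = 0" "blk (T_t a b) 1 2 = 0" "blk (T_t a b) 2 0 = 0" "blk (T_t a b) 2 1 = 0"
          by (simp_all add: T_blk T_blk1)
        show "tr2 (blk J 1 1) \<noteq> 0" using False by (simp add: S_def)
        show "det2 (blk J 0 1) \<noteq> 0" using dQ by (simp add: Q_def)
        show "det2 (blk (T_t a b) 0 1) \<noteq> 0" by (rule dT_Q_nz[OF a0])
      qed
      moreover have "T_t a b \<in> T_fam" using a0 by (auto simp: T_fam_def)
      ultimately show ?thesis by blast
    qed
  qed
qed


theorem lemma5:
  shows
  "(\<forall>J. integrable_cx J \<longrightarrow>
      (\<exists>P. first_kind P \<and> (\<exists>K \<in> S_fam \<union> D_fam \<union> T_fam. equiv_by P J K)))
   \<and> (\<forall>e e' x x'. e \<in> {1,-1} \<longrightarrow> e' \<in> {1,-1} \<longrightarrow>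
        (first_equiv (S_t e x) (S_t e' x') \<longleftrightarrow> e' = e \<and> x' = x) \<and>
        (second_equiv (S_t e x) (S_t e' x') \<longleftrightarrow> e' = -e \<and> x' = -x))
   \<and> (\<forall>x x'. x \<noteq> 0 \<longrightarrow> x' \<noteq> 0 \<longrightarrow>
        (first_equiv (D_t x) (D_t x') \<longleftrightarrow> x' = x) \<and>
        (second_equiv (D_t x) (D_t x') \<longleftrightarrow> x' = -x))
   \<and> (\<forall>a b a' b'. a \<noteq> 0 \<longrightarrow> a' \<noteq> 0 \<longrightarrow>
        (first_equiv (T_t a b) (T_t a' b') \<longleftrightarrow> a' = a \<and> b' = b) \<and>
        (second_equiv (T_t a b) (T_t a' b') \<longleftrightarrow> a' = -a \<and> b' = -b))
   \<and> (\<forall>F1 \<in> {S_fam, D_fam, T_fam}. \<forall>F2 \<in> {S_fam, D_fam, T_fam}. F1 \<noteq> F2 \<longrightarrow>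
        (\<forall>A \<in> F1. \<forall>B \<in> F2. \<not> first_equiv A B \<and> \<not> second_equiv A B))"
proof (intro conjI)
  show "\<forall>J. integrable_cx J \<longrightarrow>
      (\<exists>P. first_kind P \<and> (\<exists>K \<in> S_fam \<union> D_fam \<union> T_fam. equiv_by P J K))"
    using part1 by blast
  show "\<forall>e e' x x'. e \<in> {1,-1} \<longrightarrow> e' \<in> {1,-1} \<longrightarrow>
        (first_equiv (S_t e x) (S_t e' x') \<longleftrightarrow> e' = e \<and> x' = x) \<and>
        (second_equiv (S_t e x) (S_t e' x') \<longleftrightarrow> e' = -e \<and> x' = -x)"
    using partS by blast
  show "\<forall>x x'. x \<noteq> 0 \<longrightarrow> x' \<noteq> 0 \<longrightarrow>
        (first_equiv (D_t x) (D_t x') \<longleftrightarrow> x' = x) \<and>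
        (second_equiv (D_t x) (D_t x') \<longleftrightarrow> x' = -x)"
    using partD by blast
  show "\<forall>a b a' b'. a \<noteq> 0 \<longrightarrow> a' \<noteq> 0 \<longrightarrow>
        (first_equiv (T_t a b) (T_t a' b') \<longleftrightarrow> a' = a \<and> b' = b) \<and>
        (second_equiv (T_t a b) (T_t a' b') \<longleftrightarrow> a' = -a \<and> b' = -b)"
    using partT by blast
  show "\<forall>F1 \<in> {S_fam, D_fam, T_fam}. \<forall>F2 \<in> {S_fam, D_fam, T_fam}. F1 \<noteq> F2 \<longrightarrow>
        (\<forall>A \<in> F1. \<forall>B \<in> F2. \<not> first_equiv A B \<and> \<not> second_equiv A B)"
    by (rule part5)
qed

end
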